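(* Consider the problem and Algorithm 1 as described in the context, under the standing assumptions. Let the parameters satisfy $$0<p=\gamma\le \tfrac{1}{16},\qquad \eta=\min\Big\{\frac{\sqrt{\gamma b}}{8\bar L},\ \frac{1}{8L}\Big\},$$ let $K\ge 1$, and let $\bar x^K=\frac1K\sum_{k=0}^{K-1}x^{k+1}$. Then for every nonempty compact set $\mathcal C\subseteq\mathbb R^d$, $$\mathbb E\big[\mathrm{Gap}_{\mathcal C}(\bar x^K)\big]\le \frac{2}{\eta K}\max_{x\in\mathcal C}\|x^0-x\|^2 .$$ Consequently, setting $D^2=\max_{x\in\mathcal C}\|x^0-x\|^2$, given $\varepsilon>0$ one has $\mathbb E[\mathrm{Gap}_{\mathcal C}(\bar x^K)]\le\varepsilon$ after $$K=\mathcal O\Big(\frac{1}{\sqrt{pb}}\cdot\frac{\bar L D^2}{\varepsilon}+\frac{L D^2}{\varepsilon}\Big)$$ iterations.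
   Context: Let $g:\mathbb R^d\to\mathbb R\cup\{+\infty\}$ be proper, convex and lower semicontinuous, with $\mathrm{dom}\, g=\{x:g(x)<+\infty\}$ and $\mathrm{prox}_{\alpha g}(x)=\arg\min_y\{\alpha g(y)+\tfrac12\|y-x\|^2\}$ for $\alpha>0$. Let $F=\frac1M\sum_{m=1}^M F_m$ where $F_1,\dots,F_M:\mathbb R^d\to\mathbb R^d$ are single-valued operators. Standing assumptions: the variational inequality (find $x^*$ with $\langle F(x^* ),x-x^*\rangle+g(x)-g(x^* )\ge0$ for all $x$) has a solution; $F$ is monotone, $\langle F(u)-F(v),u-v\rangle\ge0$ for all $u,v$; $F$ is $L$-Lipschitz; each $F_m$ is $L_m$-Lipschitz, and $\bar L^2:=\frac1M\sum_{m=1}^M L_m^2$. Algorithm 1 (Optimistic Method with Momentum and Batching), with stepsize $\eta>0$, momentum $\gamma>0$, probability $p\in(0,1)$, batch size $b\in\{1,\dots,M\}$: initialize $x^0=w^0=x^{-1}=w^{-1}\in\mathbb R^d$. For $k=0,1,\dots$: sample $j^k_1,\dots,j^k_b$ independently and uniformly at random from $\{1,\dots,M\}$ and set $S^k=\{j^k_1,\dots,j^k_b\}$ (a multiset; sums over $S^k$ run over the $b$ samples); set $$\Delta^k=\frac1b\sum_{j\in S^k}\Big(F_j(x^k)-F_j(w^{k-1})+\big(F_j(x^k)-F_j(x^{k-1})\big)\Big)+F(w^{k-1});$$ set $x^{k+1}=\mathrm{prox}_{\eta g}\big(x^k+\gamma(w^k-x^k)-\eta\Delta^k\big)$; and set $w^{k+1}=x^{k+1}$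 with probability $p$ and $w^{k+1}=w^k$ with probability $1-p$, independently of everything else. For a nonempty compact set $\mathcal C\subseteq\mathbb R^d$, the gap function is $\mathrm{Gap}_{\mathcal C}(z)=\sup_{u\in\mathcal C}\big[\langle F(u),z-u\rangle+g(z)-g(u)\big]$. *)

theory Defs
  imports "HOL-Analysis.Analysis" "HOL-Probability.Probability"
begin

definition proper_fun :: "('a \<Rightarrow> ereal) \<Rightarrow> bool" where
  "proper_fun g \<longleftrightarrow> (\<forall>x. g x \<noteq> -\<infinity>) \<and> (\<exists>x. g x \<noteq> \<infinity>)"

definition ereal_convex :: "('a::real_vector \<Rightarrow> ereal) \<Rightarrow> bool" where
  "ereal_convex g \<longleftrightarrow>
     (\<forall>x y. \<forall>t::real. 0 \<le> t \<and> t \<le> 1 \<longrightarrow>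
        g ((1 - t) *\<^sub>R x + t *\<^sub>R y) \<le> ereal (1 - t) * g x + ereal t * g y)"

definition lsc_fun :: "('a::topological_space \<Rightarrow> ereal) \<Rightarrow> bool" where
  "lsc_fun g \<longleftrightarrow> (\<forall>x. g x \<le> Liminf (at x) g)"

definition dom_fun :: "('a \<Rightarrow> ereal) \<Rightarrow> 'a set" where
  "dom_fun g = {x. g x < \<infinity>}"

text \<open>Proximal operator: the (unique, under the standing assumptions) minimiser of
  alpha g(y) + 1/2 ||y - x||^2.\<close>
definition prox :: "real \<Rightarrow> ('a::real_normed_vector \<Rightarrow> ereal) \<Rightarrow> 'a \<Rightarrow> 'a" where
  "prox \<alpha> g x = (THE y. \<forall>z. ereal \<alpha> * g y + ereal ((norm (y - x))\<^sup>2 / 2)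
                              \<le> ereal \<alpha> * g z + ereal ((norm (z - x))\<^sup>2 / 2))"

text \<open>Operators F_1..F_M are indexed by 0..M-1 here.\<close>
definition avg_op :: "nat \<Rightarrow> (nat \<Rightarrow> 'a \<Rightarrow> 'a::real_vector) \<Rightarrow> 'a \<Rightarrow> 'a" where
  "avg_op M Fs x = (1 / real M) *\<^sub>R (\<Sum>m<M. Fs m x)"

definition monotone_op :: "('a::real_inner \<Rightarrow> 'a) \<Rightarrow> bool" where
  "monotone_op F \<longleftrightarrow> (\<forall>u v. (F u - F v) \<bullet> (u - v) \<ge> 0)"

definition VI_solution :: "('a::real_inner \<Rightarrow> 'a) \<Rightarrow> ('a \<Rightarrow> ereal) \<Rightarrow> 'a \<Rightarrow> bool" where
  "VI_solution F g xs \<longleftrightarrow> g xs < \<infinity> \<and>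
     (\<forall>x. ereal (F xs \<bullet> (x - xs)) + g x - g xs \<ge> 0)"

definition Gap :: "('a::real_inner \<Rightarrow> 'a) \<Rightarrow> ('a \<Rightarrow> ereal) \<Rightarrow> 'a set \<Rightarrow> 'a \<Rightarrow> ereal" where
  "Gap F g C z = (SUP u\<in>C. ereal (F u \<bullet> (z - u)) + g z - g u)"

text \<open>State (x^{k-1}, x^k, w^{k-1}, w^k). Randomness of iteration k: the list of the b sampled
  indices j^k_1..j^k_b and the coin deciding w^{k+1} = x^{k+1} (True, probability p).\<close>
type_synonym 'a omm_state = "'a \<times> 'a \<times> 'a \<times> 'a"

definition omm_step ::
  "nat \<Rightarrow> (nat \<Rightarrow> 'a \<Rightarrow> 'a::real_inner) \<Rightarrow> ('a \<Rightarrow> ereal) \<Rightarrow> real \<Rightarrow> real \<Rightarrow> nat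
   \<Rightarrow> 'a omm_state \<Rightarrow> nat list \<times> bool \<Rightarrow> 'a omm_state" where
  "omm_step M Fs g \<eta> \<gamma> b st \<omega> =
     (case st of (xp, x, wp, w) \<Rightarrow> case \<omega> of (S, c) \<Rightarrow>
       let \<Delta> = (1 / real b) *\<^sub>R (\<Sum>j\<leftarrow>S. (Fs j x - Fs j wp) + (Fs j x - Fs j xp))
               + avg_op M Fs wp;
           x' = prox \<eta> g (x + \<gamma> *\<^sub>R (w - x) - \<eta> *\<^sub>R \<Delta>);
           w' = (if c then x' else w)
       in (x, x', w, w'))"

primrec omm_iter ::
  "nat \<Rightarrow> (nat \<Rightarrow> 'a \<Rightarrow> 'a::real_inner) \<Rightarrow> ('a \<Rightarrow> ereal) \<Rightarrow> real \<Rightarrow> real \<Rightarrow> nat \<Rightarrow> 'a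
   \<Rightarrow> (nat list \<times> bool) list \<Rightarrow> nat \<Rightarrow> 'a omm_state" where
  "omm_iter M Fs g \<eta> \<gamma> b x0 \<omega>s 0 = (x0, x0, x0, x0)"
| "omm_iter M Fs g \<eta> \<gamma> b x0 \<omega>s (Suc k) =
     omm_step M Fs g \<eta> \<gamma> b (omm_iter M Fs g \<eta> \<gamma> b x0 \<omega>s k) (\<omega>s ! k)"

definition omm_x ::
  "nat \<Rightarrow> (nat \<Rightarrow> 'a \<Rightarrow> 'a::real_inner) \<Rightarrow> ('a \<Rightarrow> ereal) \<Rightarrow> real \<Rightarrow> real \<Rightarrow> nat \<Rightarrow> 'a
   \<Rightarrow> (nat list \<times> bool) list \<Rightarrow> nat \<Rightarrow> 'a" where
  "omm_x M Fs g \<eta> \<gamma> b x0 \<omega>s k = fst (snd (omm_iter M Fs g \<eta> \<gamma> b x0 \<omega>s k))"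

definition omm_samples :: "nat \<Rightarrow> nat \<Rightarrow> real \<Rightarrow> nat \<Rightarrow> (nat list \<times> bool) list pmf" where
  "omm_samples M b p K =
     replicate_pmf K (pair_pmf (replicate_pmf b (pmf_of_set {..<M})) (bernoulli_pmf p))"

definition omm_avg ::
  "nat \<Rightarrow> (nat \<Rightarrow> 'a \<Rightarrow> 'a::real_inner) \<Rightarrow> ('a \<Rightarrow> ereal) \<Rightarrow> real \<Rightarrow> real \<Rightarrow> nat \<Rightarrow> 'a
   \<Rightarrow> nat \<Rightarrow> (nat list \<times> bool) list \<Rightarrow> 'a" where
  "omm_avg M Fs g \<eta> \<gamma> b x0 K \<omega>s =
     (1 / real K) *\<^sub>R (\<Sum>k<K. omm_x M Fs g \<eta> \<gamma> b x0 \<omega>s (Suc k))"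

definition omm_expected_gap ::
  "nat \<Rightarrow> (nat \<Rightarrow> 'a \<Rightarrow> 'a::real_inner) \<Rightarrow> ('a \<Rightarrow> ereal) \<Rightarrow> real \<Rightarrow> real \<Rightarrow> real \<Rightarrow> nat \<Rightarrow> 'a
   \<Rightarrow> 'a set \<Rightarrow> nat \<Rightarrow> ereal" where
  "omm_expected_gap M Fs g \<eta> \<gamma> p b x0 C K =
     (\<Sum>\<omega>s\<in>set_pmf (omm_samples M b p K).
        ereal (pmf (omm_samples M b p K) \<omega>s) *
        Gap (avg_op M Fs) g C (omm_avg M Fs g \<eta> \<gamma> b x0 K \<omega>s))"

end

theory Submission
  imports Defs
begin


lemma lsc_min_compact:
  fixes \<phi> :: "'a::topological_space \<Rightarrow> ereal"
  assumes K: "compact K" "K \<noteq> {}"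
    and lsc: "\<And>x c. x \<in> K \<Longrightarrow> c < \<phi> x \<Longrightarrow> \<exists>U. open U \<and> x \<in> U \<and> (\<forall>y\<in>U\<inter>K. c < \<phi> y)"
  shows "\<exists>x\<in>K. \<forall>y\<in>K. \<phi> x \<le> \<phi> y"
proof (rule ccontr)
  assume nex: "\<not> ?thesis"
  define \<iota> where "\<iota> = (INF y\<in>K. \<phi> y)"
  have lt: "\<iota> < \<phi> x" if "x \<in> K" for x
  proof -
    from nex that obtain y where "y \<in> K" "\<phi> y < \<phi> x" by (auto simp: not_le)
    moreover have "\<iota> \<le> \<phi> y" unfolding \<iota>_def using \<open>y\<in>K\<close> by (rule INF_lower)
    ultimately show ?thesis by simp
  qed
  have "\<forall>x\<in>K. \<exists>c U. \<iota> < c \<and> open U \<and> x \<in> U \<and> (\<forall>y\<in>U\<inter>K. c < \<phi> y)"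
  proof
    fix x assume x: "x \<in> K"
    obtain c where c: "\<iota> < ereal c" "ereal c < \<phi> x" using ereal_dense2[OF lt[OF x]] by blast
    obtain U where "open U \<and> x \<in> U \<and> (\<forall>y\<in>U\<inter>K. ereal c < \<phi> y)" using lsc[OF x c(2)] by blast
    with c show "\<exists>c U. \<iota> < c \<and> open U \<and> x \<in> U \<and> (\<forall>y\<in>U\<inter>K. c < \<phi> y)" by blast
  qed
  then obtain c U where cU: "\<And>x. x \<in> K \<Longrightarrow> \<iota> < c x \<and> open (U x) \<and> x \<in> U x \<and> (\<forall>y\<in>U x\<inter>K. c x < \<phi> y)"
    by metis
  obtain K' where K': "K' \<subseteq> K" "finite K'" "K \<subseteq> (\<Union>x\<in>K'. U x)"
    by (rule compactE_image[OF K(1), of K U]) (use cU in auto)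
  have "K' \<noteq> {}" using K' K(2) by auto
  define m where "m = Min (c ` K')"
  have m_gt: "\<iota> < m" unfolding m_def using K' \<open>K' \<noteq> {}\<close> cU by (subst Min_gr_iff) auto
  have "m \<le> \<phi> y" if "y \<in> K" for y
  proof -
    from K'(3) that obtain x where x: "x \<in> K'" "y \<in> U x" by auto
    have "m \<le> c x" unfolding m_def using x K' by (intro Min_le) auto
    also have "c x < \<phi> y" using cU[of x] x K' that by auto
    finally show ?thesis by simp
  qed
  hence "m \<le> \<iota>" unfolding \<iota>_def by (rule INF_greatest)
  with m_gt show False by simp
qed

lemma lsc_local:
  fixes g :: "'a::topological_space \<Rightarrow> ereal"
  assumes "lsc_fun g" "c < g x"
  shows "\<exists>U. open U \<and> x \<in> U \<and> (\<forall>y\<in>U. c < g y)"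
proof -
  have "c < Liminf (at x) g" using assms unfolding lsc_fun_def by (meson less_le_trans)
  hence "eventually (\<lambda>y. c < g y) (at x)" by (rule less_LiminfD)
  then obtain S where "open S" "x \<in> S" "\<forall>y\<in>S. y \<noteq> x \<longrightarrow> c < g y"
    unfolding eventually_at_topological by auto
  with assms(2) show ?thesis by (intro exI[of _ S]) auto
qed


locale gfun =
  fixes g :: "'a::euclidean_space \<Rightarrow> ereal"
  assumes g_proper: "proper_fun g" and g_convex: "ereal_convex g" and g_lsc: "lsc_fun g"
begin

lemma g_not_minf[simp]: "g x \<noteq> -\<infinity>" using g_proper unfolding proper_fun_def by auto

lemma g_conv: "0 \<le> t \<Longrightarrow> t \<le> 1 \<Longrightarrow> g ((1 - t) *\<^sub>R x + t *\<^sub>R y) \<le> ereal (1 - t) * g x + ereal t * g y"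
  using g_convex unfolding ereal_convex_def by blast

lemma g_conv_real:
  assumes "0 \<le> t" "t \<le> 1" "g x = ereal a" "g y = ereal c"
  shows "g ((1 - t) *\<^sub>R x + t *\<^sub>R y) \<le> ereal ((1 - t) * a + t * c)"
  using g_conv[OF assms(1,2), of x y] assms(3,4) by simp

lemma g_lower_affine:
  obtains y0 A B where "g y0 < \<infinity>" "B \<ge> 0" "\<And>y. ereal (A - B * norm (y - y0)) \<le> g y"
proof -
  obtain y0 where y0: "g y0 \<noteq> \<infinity>" using g_proper unfolding proper_fun_def by auto
  then obtain g0 where g0: "g y0 = ereal g0" using g_not_minf[of y0] by (cases "g y0") auto
  obtain xm where xm: "xm \<in> cball y0 1" "\<And>y. y \<in> cball y0 1 \<Longrightarrow> g xm \<le> g y"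
    using lsc_min_compact[of "cball y0 1" g] lsc_local[OF g_lsc] by fastforce
  have "g xm \<le> g y0" using xm by auto
  then obtain mr where mr: "g xm = ereal mr" using g0 g_not_minf[of xm] by (cases "g xm") auto
  have "mr \<le> g0" using \<open>g xm \<le> g y0\<close> mr g0 by simp
  define B where "B = g0 - mr"
  have B: "B \<ge> 0" using \<open>mr \<le> g0\<close> by (simp add: B_def)
  have "ereal (mr - B * norm (y - y0)) \<le> g y" for y
  proof (cases "norm (y - y0) \<le> 1")
    case True
    hence "g xm \<le> g y" using xm(2)[of y] by (simp add: dist_norm norm_minus_commute)
    moreover have "mr - B * norm (y - y0) \<le> mr" using B by simp
    ultimately show ?thesis using mr by (metis ereal_less_eq(3) order.trans)
  next
    case False
    define n where "n = norm (y - y0)"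
    have n: "n > 1" using False by (simp add: n_def)
    define t where "t = 1 / n"
    have t: "0 \<le> t" "t \<le> 1" "t > 0" using n by (auto simp: t_def)
    define z where "z = (1 - t) *\<^sub>R y0 + t *\<^sub>R y"
    have "z - y0 = t *\<^sub>R (y - y0)" by (simp add: z_def algebra_simps)
    hence "norm (z - y0) = 1" using n t by (simp add: t_def n_def)
    hence "g xm \<le> g z" using xm(2)[of z] by (simp add: dist_norm norm_minus_commute)
    also have "\<dots> \<le> ereal (1 - t) * g y0 + ereal t * g y" unfolding z_def by (rule g_conv[OF t(1,2)])
    finally have ineq: "ereal mr \<le> ereal (1 - t) * ereal g0 + ereal t * g y" using mr g0 by simp
    show ?thesis
    proof (cases "g y")
      case (real gy)
      with ineq have "mr \<le> (1 - t) * g0 + t * gy" by simp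
      hence "mr - (1 - t) * g0 \<le> t * gy" by simp
      hence "(mr - (1 - t) * g0) * n \<le> gy" using n t by (simp add: t_def field_simps)
      moreover have "(mr - (1 - t) * g0) * n = g0 - B * n"
        using n by (simp add: t_def B_def field_simps)
      ultimately have "mr - B * n \<le> gy" using \<open>mr \<le> g0\<close> by linarith
      thus ?thesis using real by (simp add: n_def)
    qed auto
  qed
  moreover have "g y0 < \<infinity>" using g0 by simp
  ultimately show ?thesis using that B by blast
qed

end

context gfun begin

definition fobj :: "real \<Rightarrow> 'a \<Rightarrow> 'a \<Rightarrow> ereal" where
  "fobj \<eta> v y = ereal \<eta> * g y + ereal ((norm (y - v))\<^sup>2 / 2)"

lemma ereal_lsc_aux:
  assumes "ereal c1 < G" "\<eta> > 0" "qx - \<epsilon> < qy" "\<eta> * c1 + qx - \<epsilon> \<ge> c0"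
  shows "ereal c0 < ereal \<eta> * G + ereal qy"
proof (cases G)
  case (real r)
  with assms have "c1 < r" by simp
  hence "\<eta> * c1 < \<eta> * r" using assms(2) by simp
  hence "c0 < \<eta> * r + qy" using assms(3,4) by linarith
  thus ?thesis using real by simp
next
  case PInf thus ?thesis using assms by simp
next
  case MInf thus ?thesis using assms by simp
qed

lemma fobj_lsc:
  assumes "\<eta> > 0" "c < fobj \<eta> v x"
  shows "\<exists>U. open U \<and> x \<in> U \<and> (\<forall>y\<in>U. c < fobj \<eta> v y)"
proof -
  define q where "q y = (norm (y - v))\<^sup>2 / 2" for y
  obtain c0 where c0: "c < ereal c0" "ereal c0 < fobj \<eta> v x" using ereal_dense2[OF assms(2)] by blast
  have "\<exists>c1 \<epsilon>. ereal c1 < g x \<and> \<epsilon> > 0 \<and> \<eta> * c1 + q x - \<epsilon> \<ge> c0"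
  proof (cases "g x")
    case (real gx)
    define \<epsilon> where "\<epsilon> = (\<eta> * gx + q x - c0) / 3"
    have "c0 < \<eta> * gx + q x" using c0(2) real by (simp add: fobj_def q_def)
    hence e: "\<epsilon> > 0" by (simp add: \<epsilon>_def)
    have m: "\<eta> * (gx - \<epsilon> / \<eta>) = \<eta> * gx - \<epsilon>" using assms(1) by (simp add: field_simps)
    have "gx - \<epsilon> / \<eta> < gx" using e assms(1) by simp
    moreover have "\<eta> * (gx - \<epsilon> / \<eta>) + q x - \<epsilon> \<ge> c0"
    proof -
      have "\<eta> * (gx - \<epsilon> / \<eta>) + q x - \<epsilon> = \<eta>*gx + q x - 2*\<epsilon>" using m by simp
      moreover have "\<eta>*gx + q x - 2*\<epsilon> = c0 + \<epsilon>" unfolding \<epsilon>_def by (simp add: field_simps)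
      ultimately show ?thesis using e by linarith
    qed
    ultimately show ?thesis using e real by (intro exI[of _ "gx - \<epsilon> / \<eta>"] exI[of _ \<epsilon>]) auto
  next
    case PInf
    show ?thesis
      by (rule exI[of _ "(c0 - q x + 1) / \<eta>"], rule exI[of _ 1]) (use PInf assms(1) in auto)
  qed auto
  then obtain c1 \<epsilon> where ce: "ereal c1 < g x" "\<epsilon> > 0" "\<eta> * c1 + q x - \<epsilon> \<ge> c0" by blast
  obtain U1 where U1: "open U1" "x \<in> U1" "\<forall>y\<in>U1. ereal c1 < g y" using lsc_local[OF g_lsc ce(1)] by blast
  define U2 where "U2 = {y. q x - \<epsilon> < q y}"
  have "open U2" unfolding U2_def q_def by (intro open_Collect_less continuous_intros) simp_all
  have "x \<in> U2" using ce by (simp add: U2_def)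
  have "\<forall>y\<in>U1 \<inter> U2. c < fobj \<eta> v y"
  proof
    fix y assume y: "y \<in> U1 \<inter> U2"
    have "ereal c0 < ereal \<eta> * g y + ereal (q y)"
      by (rule ereal_lsc_aux[OF _ assms(1) _ ce(3)]) (use y U1 in \<open>auto simp: U2_def\<close>)
    thus "c < fobj \<eta> v y" using c0(1) by (simp add: fobj_def q_def)
  qed
  thus ?thesis using U1 \<open>open U2\<close> \<open>x \<in> U2\<close> by (intro exI[of _ "U1 \<inter> U2"]) auto
qed

lemma fobj_not_minf: "\<eta> > 0 \<Longrightarrow> fobj \<eta> v y \<noteq> -\<infinity>"
  unfolding fobj_def by (cases "g y") auto

lemma fobj_min_exists:
  assumes "\<eta> > 0"
  shows "\<exists>y. \<forall>z. fobj \<eta> v y \<le> fobj \<eta> v z"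
proof -
  obtain y0 B A where y0: "g y0 < \<infinity>" "B \<ge> 0" "\<And>y. ereal (A - B * norm (y - y0)) \<le> g y"
    by (rule g_lower_affine) (rule that)
  then obtain g0 where g0: "g y0 = ereal g0" using g_not_minf[of y0] by (cases "g y0") auto
  define f0 where "f0 = \<eta> * g0 + (norm (y0 - v))\<^sup>2 / 2"
  have f0: "fobj \<eta> v y0 = ereal f0" using g0 by (simp add: fobj_def f0_def)
  define K0 where "K0 = \<eta> * B * norm (v - y0) - \<eta> * A + f0"
  define R where "R = 2 * \<eta> * B + \<bar>K0\<bar> + 2 + norm (y0 - v)"
  have big: "fobj \<eta> v y0 < fobj \<eta> v z" if z: "norm (z - v) > R" for z
  proof -
    define s where "s = norm (z - v)"
    have s: "s > R" using z by (simp add: s_def)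
    have Rpos: "R \<ge> 2 * \<eta> * B + \<bar>K0\<bar> + 2" using R_def by simp
    have "norm (z - y0) \<le> s + norm (v - y0)" unfolding s_def
      using norm_triangle_ineq[of "z - v" "v - y0"] by simp
    hence lb: "A - B * (s + norm (v - y0)) \<le> A - B * norm (z - y0)"
      using y0(2) by (simp add: mult_left_mono)
    have "s / 2 - \<eta> * B \<ge> 1" using s Rpos by linarith
    moreover have "s \<ge> 0" unfolding s_def by simp
    ultimately have "s * (s / 2 - \<eta> * B) \<ge> s * 1" by (intro mult_left_mono)
    hence sge: "s * (s / 2 - \<eta> * B) \<ge> s" by simp
    have "\<eta> * B \<ge> 0" using assms y0(2) by simp
    hence "s > K0" using s Rpos abs_ge_self[of K0] by linarith
    hence key: "s * (s / 2 - \<eta> * B) > K0" using sge by linarith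
    have e1: "\<eta> * (A - B * (s + norm (v - y0))) + s\<^sup>2 / 2 = s * (s / 2 - \<eta> * B) - K0 + f0"
      by (simp add: K0_def power2_eq_square algebra_simps)
    have "f0 < \<eta> * (A - B * (s + norm (v - y0))) + s\<^sup>2 / 2"
      unfolding e1 using key by linarith
    also have "\<dots> \<le> \<eta> * (A - B * norm (z - y0)) + s\<^sup>2 / 2" using lb assms by simp
    finally have "ereal f0 < ereal \<eta> * ereal (A - B * norm (z - y0)) + ereal ((norm (z - v))\<^sup>2 / 2)"
      by (simp add: s_def)
    also have "\<dots> \<le> fobj \<eta> v z" unfolding fobj_def
    proof (rule add_right_mono)
      show "ereal \<eta> * ereal (A - B * norm (z - y0)) \<le> ereal \<eta> * g z"
        using y0(3)[of z] assms by (intro ereal_mult_left_mono) auto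
    qed
    finally show ?thesis using f0 by simp
  qed
  have ebn: "\<eta> * B \<ge> 0" using assms y0(2) by simp
  have y0in: "y0 \<in> cball v R" unfolding mem_cball dist_norm R_def
    using norm_minus_commute[of v y0] abs_ge_zero[of K0] ebn by linarith
  have "\<exists>x\<in>cball v R. \<forall>y\<in>cball v R. fobj \<eta> v x \<le> fobj \<eta> v y"
  proof (rule lsc_min_compact)
    show "compact (cball v R)" by simp
    show "cball v R \<noteq> {}" using y0in by blast
    fix x c assume "x \<in> cball v R" "c < fobj \<eta> v x"
    then obtain U where "open U" "x \<in> U" "\<forall>y\<in>U. c < fobj \<eta> v y" using fobj_lsc[OF assms] by blast
    thus "\<exists>U. open U \<and> x \<in> U \<and> (\<forall>y\<in>U \<inter> cball v R. c < fobj \<eta> v y)" by blast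
  qed
  then obtain x where x: "x \<in> cball v R" "\<And>y. y \<in> cball v R \<Longrightarrow> fobj \<eta> v x \<le> fobj \<eta> v y" by blast
  have "fobj \<eta> v x \<le> fobj \<eta> v z" for z
  proof (cases "z \<in> cball v R")
    case False
    hence "norm (z - v) > R" by (simp add: dist_norm norm_minus_commute)
    hence "fobj \<eta> v y0 < fobj \<eta> v z" by (rule big)
    thus ?thesis using x(2)[OF y0in] by simp
  qed (use x in auto)
  thus ?thesis by blast
qed

end

context gfun begin

lemma midpoint_norm_sq:
  fixes y1 y2 v :: "'b::real_inner"
  shows "(norm ((1 - 1/2) *\<^sub>R y1 + (1/2) *\<^sub>R y2 - v))\<^sup>2
         = ((norm (y1 - v))\<^sup>2 + (norm (y2 - v))\<^sup>2) / 2 - (norm (y1 - y2))\<^sup>2 / 4"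
  unfolding power2_norm_eq_inner by (simp add: inner_simps inner_commute algebra_simps) (simp add: field_simps)

lemma g_dom_exists: "\<exists>y0. g y0 < \<infinity>"
  using g_proper unfolding proper_fun_def by (auto simp: less_top)

lemma fobj_min_finite:
  assumes "\<eta> > 0" "\<forall>z. fobj \<eta> v y \<le> fobj \<eta> v z"
  shows "g y < \<infinity>"
proof (rule ccontr)
  assume "\<not> g y < \<infinity>"
  hence "g y = \<infinity>" by simp
  hence "fobj \<eta> v y = \<infinity>" using assms(1) by (simp add: fobj_def)
  moreover obtain y0 where y0: "g y0 < \<infinity>" using g_dom_exists by blast
  then obtain a where "g y0 = ereal a" using g_not_minf[of y0] by (cases "g y0") auto
  hence "fobj \<eta> v y0 < \<infinity>" by (simp add: fobj_def)
  ultimately show False using assms(2) by (metis not_le)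
qed

lemma fobj_min_unique:
  assumes "\<eta> > 0" "\<forall>z. fobj \<eta> v y1 \<le> fobj \<eta> v z" "\<forall>z. fobj \<eta> v y2 \<le> fobj \<eta> v z"
  shows "y1 = y2"
proof -
  obtain a1 where a1: "g y1 = ereal a1"
    using fobj_min_finite[OF assms(1,2)] g_not_minf[of y1] by (cases "g y1") auto
  obtain a2 where a2: "g y2 = ereal a2"
    using fobj_min_finite[OF assms(1,3)] g_not_minf[of y2] by (cases "g y2") auto
  define q where "q y = (norm (y - v))\<^sup>2 / 2" for y
  have f1: "fobj \<eta> v y1 = ereal (\<eta> * a1 + q y1)" using a1 by (simp add: fobj_def q_def)
  have f2: "fobj \<eta> v y2 = ereal (\<eta> * a2 + q y2)" using a2 by (simp add: fobj_def q_def)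
  have eq: "\<eta> * a1 + q y1 = \<eta> * a2 + q y2"
    using assms(2)[rule_format, of y2] assms(3)[rule_format, of y1] f1 f2 by simp
  define z where "z = (1 - 1/2) *\<^sub>R y1 + (1/2::real) *\<^sub>R y2"
  have gz: "g z \<le> ereal ((1 - 1/2) * a1 + (1/2) * a2)" unfolding z_def
    by (rule g_conv_real) (use a1 a2 in auto)
  have qz: "q z = (q y1 + q y2) / 2 - (norm (y1 - y2))\<^sup>2 / 8"
    unfolding q_def z_def midpoint_norm_sq by simp
  have "fobj \<eta> v z \<le> ereal (\<eta> * ((1 - 1/2) * a1 + (1/2) * a2) + q z)"
  proof -
    have "ereal \<eta> * g z \<le> ereal \<eta> * ereal ((1 - 1/2) * a1 + (1/2) * a2)"
      using gz assms(1) by (intro ereal_mult_left_mono) auto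
    from add_right_mono[OF this, of "ereal ((norm (z - v))\<^sup>2 / 2)"]
    show ?thesis unfolding fobj_def q_def by simp
  qed
  moreover have "fobj \<eta> v y1 \<le> fobj \<eta> v z" using assms(2) by simp
  ultimately have "ereal (\<eta> * a1 + q y1) \<le> ereal (\<eta> * ((1 - 1/2) * a1 + (1/2) * a2) + q z)"
    using f1 by (metis order_trans)
  hence "\<eta> * a1 + q y1 \<le> \<eta> * ((1 - 1/2) * a1 + (1/2) * a2) + q z" by simp
  define n where "n = (norm (y1 - y2))\<^sup>2"
  have qz': "q z = (q y1 + q y2) / 2 - n / 8" using qz by (simp add: n_def)
  have "n \<le> 0" using \<open>\<eta> * a1 + q y1 \<le> _\<close> unfolding qz' using eq by (simp add: field_simps)
  thus ?thesis by (simp add: n_def)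
qed

lemma prox_is_min:
  assumes "\<eta> > 0"
  shows "\<forall>z. fobj \<eta> v (prox \<eta> g v) \<le> fobj \<eta> v z"
proof -
  have ex1: "\<exists>!y. \<forall>z. fobj \<eta> v y \<le> fobj \<eta> v z"
    using fobj_min_exists[OF assms] fobj_min_unique[OF assms] by blast
  show ?thesis unfolding prox_def fobj_def[symmetric] by (rule theI'[OF ex1])
qed

lemma prox_finite: "\<eta> > 0 \<Longrightarrow> g (prox \<eta> g v) = ereal (real_of_ereal (g (prox \<eta> g v)))"
proof -
  assume e: "\<eta> > 0"
  have "g (prox \<eta> g v) < \<infinity>" using fobj_min_finite[OF e prox_is_min[OF e]] .
  moreover have "g (prox \<eta> g v) \<noteq> -\<infinity>" by simp
  ultimately show ?thesis by (cases "g (prox \<eta> g v)") auto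
qed

lemma prox_vi:
  fixes v u :: 'a
  assumes "\<eta> > 0" "g u = ereal gu"
  defines "y \<equiv> prox \<eta> g v"
  shows "\<eta> * real_of_ereal (g y) + inner (v - y) (u - y) \<le> \<eta> * gu"
proof -
  define gy where "gy = real_of_ereal (g y)"
  have gy: "g y = ereal gy" using prox_finite[OF assms(1)] by (simp add: y_def gy_def)
  define N where "N = (norm (u - y))\<^sup>2"
  define \<delta> where "\<delta> = \<eta> * (gu - gy) - inner (v - y) (u - y)"
  have key: "0 \<le> \<delta> + t * N / 2" if t: "0 < t" "t \<le> 1" for t
  proof -
    define z where "z = (1 - t) *\<^sub>R y + t *\<^sub>R u"
    have gz: "g z \<le> ereal ((1 - t) * gy + t * gu)" unfolding z_def
      by (rule g_conv_real) (use t gy assms in auto)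
    have "fobj \<eta> v y \<le> fobj \<eta> v z" using prox_is_min[OF assms(1)] by (simp add: y_def)
    also have "\<dots> \<le> ereal (\<eta> * ((1 - t) * gy + t * gu) + (norm (z - v))\<^sup>2 / 2)"
    proof -
      have "ereal \<eta> * g z \<le> ereal \<eta> * ereal ((1 - t) * gy + t * gu)"
        using gz assms(1) by (intro ereal_mult_left_mono) auto
      from add_right_mono[OF this, of "ereal ((norm (z - v))\<^sup>2 / 2)"]
      show ?thesis unfolding fobj_def by simp
    qed
    finally have ineq: "\<eta> * gy + (norm (y - v))\<^sup>2 / 2 \<le> \<eta> * ((1 - t) * gy + t * gu) + (norm (z - v))\<^sup>2 / 2"
      using gy by (simp add: fobj_def)
    have zv: "z - v = (y - v) + t *\<^sub>R (u - y)" by (simp add: z_def algebra_simps)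
    define I where "I = inner (y - v) (u - y)"
    define A where "A = (norm (y - v))\<^sup>2"
    have exp: "(norm (z - v))\<^sup>2 = A + 2 * t * I + t\<^sup>2 * N"
      unfolding zv N_def A_def I_def power2_norm_eq_inner by (simp add: inner_simps inner_commute algebra_simps power2_eq_square)
    have ineq': "\<eta> * gy + A / 2 \<le> \<eta> * ((1 - t) * gy + t * gu) + (A + 2 * t * I + t\<^sup>2 * N) / 2"
      using ineq unfolding exp A_def .
    have vI: "inner (v - y) (u - y) = - I" unfolding I_def by (simp add: inner_diff_left)
    have "t * (\<delta> + t * N / 2) = \<eta> * ((1 - t) * gy + t * gu) + (A + 2 * t * I + t\<^sup>2 * N) / 2 - (\<eta> * gy + A / 2)"
      unfolding \<delta>_def vI by (simp add: algebra_simps power2_eq_square)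
    hence "0 \<le> t * (\<delta> + t * N / 2)" using ineq' by linarith
    thus ?thesis using t by (simp add: zero_le_mult_iff)
  qed
  have "\<delta> \<ge> 0"
  proof (rule ccontr)
    assume neg: "\<not> \<delta> \<ge> 0"
    have Nn: "N \<ge> 0" by (simp add: N_def)
    show False
    proof (cases "N = 0")
      case True thus False using key[of 1] neg by simp
    next
      case False
      hence Np: "N > 0" using Nn by simp
      define t where "t = min 1 (- \<delta> / N)"
      have "- \<delta> / N > 0" using neg Np by (intro divide_pos_pos) auto
      hence t: "0 < t" "t \<le> 1" by (auto simp: t_def)
      have "t * N \<le> - \<delta>" using Np by (simp add: t_def min_def field_simps)
      hence "\<delta> + t * N / 2 < 0" using neg by linarith
      thus False using key[OF t] by simp
    qed
  qed
  thus ?thesis unfolding \<delta>_def gy_def by (simp add: algebra_simps)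
qed

lemma prox_nonexp:
  assumes "\<eta> > 0"
  shows "norm (prox \<eta> g v1 - prox \<eta> g v2) \<le> norm (v1 - v2)"
proof -
  define y1 where "y1 = prox \<eta> g v1"
  define y2 where "y2 = prox \<eta> g v2"
  have h1: "g y1 = ereal (real_of_ereal (g y1))" using prox_finite[OF assms] by (simp add: y1_def)
  have h2: "g y2 = ereal (real_of_ereal (g y2))" using prox_finite[OF assms] by (simp add: y2_def)
  have i1: "\<eta> * real_of_ereal (g y1) + inner (v1 - y1) (y2 - y1) \<le> \<eta> * real_of_ereal (g y2)"
    using prox_vi[OF assms h2, of v1] by (simp add: y1_def)
  have i2: "\<eta> * real_of_ereal (g y2) + inner (v2 - y2) (y1 - y2) \<le> \<eta> * real_of_ereal (g y1)"
    using prox_vi[OF assms h1, of v2] by (simp add: y2_def)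
  have "inner (v1 - y1) (y2 - y1) + inner (v2 - y2) (y1 - y2) \<le> 0" using i1 i2 by linarith
  moreover have "inner (v1 - y1) (y2 - y1) + inner (v2 - y2) (y1 - y2)
      = (norm (y1 - y2))\<^sup>2 - inner (v1 - v2) (y1 - y2)"
    unfolding power2_norm_eq_inner by (simp add: inner_simps inner_commute algebra_simps)
  ultimately have "(norm (y1 - y2))\<^sup>2 \<le> inner (v1 - v2) (y1 - y2)" by linarith
  also have "\<dots> \<le> norm (v1 - v2) * norm (y1 - y2)" by (rule norm_cauchy_schwarz)
  finally have "norm (y1 - y2) * norm (y1 - y2) \<le> norm (v1 - v2) * norm (y1 - y2)"
    by (simp add: power2_eq_square)
  hence "norm (y1 - y2) \<le> norm (v1 - v2)"
  proof (cases "norm (y1 - y2) = 0")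
    case False
    hence "norm (y1 - y2) > 0" by simp
    thus ?thesis using \<open>norm (y1 - y2) * norm (y1 - y2) \<le> norm (v1 - v2) * norm (y1 - y2)\<close>
      by (simp add: mult_le_cancel_right_pos)
  qed simp
  thus ?thesis unfolding y1_def y2_def by auto
qed

end


lemma idB1:
  fixes x w x' u :: "'a::real_inner"
  shows "inner (x + \<gamma> *\<^sub>R (w - x) - x') (x' - u) =
    (1-\<gamma>)/2 * (norm (x - u))\<^sup>2 + \<gamma>/2 * (norm (w - u))\<^sup>2 - 1/2 * (norm (x' - u))\<^sup>2
    - (1-\<gamma>)/2 * (norm (x' - x))\<^sup>2 - \<gamma>/2 * (norm (x' - w))\<^sup>2"
  unfolding power2_norm_eq_inner by (simp add: inner_simps inner_commute algebra_simps) (simp add: field_simps)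

lemma idB2:
  fixes F1 F0 Fp e x x' u :: "'a::real_inner"
  shows "\<eta> * inner (F1 - (2 *\<^sub>R F0 - Fp + e)) (x' - u) =
    \<eta> * inner (F1 - F0) (x' - u) - \<eta> * inner (F0 - Fp) (x - u) - \<eta> * inner (F0 - Fp) (x' - x)
    - \<eta> * inner e (x' - u)"
  by (simp add: inner_simps inner_commute algebra_simps)

lemma idB3:
  fixes e x' xt v u :: "'a::real_inner"
  shows "- \<eta> * inner e (x' - u) = - \<eta> * inner e (x' - xt) - \<eta> * inner e (xt - v)
     + 1/4 * (norm (v - u))\<^sup>2 - 1/4 * (norm (v + (2 * \<eta>) *\<^sub>R e - u))\<^sup>2 + \<eta>\<^sup>2 * (norm e)\<^sup>2"
  unfolding power2_norm_eq_inner by (simp add: inner_simps inner_commute algebra_simps power2_eq_square)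

lemma idB4:
  fixes x' w w' u :: "'a::real_inner"
  shows "- \<gamma>/2 * (norm (x' - u))\<^sup>2 = (1-\<gamma>)/2 * (norm (w - u))\<^sup>2 - 1/2 * (norm (w' - u))\<^sup>2
    + ((norm w')\<^sup>2 - \<gamma> * (norm x')\<^sup>2 - (1-\<gamma>) * (norm w)\<^sup>2) / 2
    - inner (w' - \<gamma> *\<^sub>R x' - (1-\<gamma>) *\<^sub>R w) u"
  unfolding power2_norm_eq_inner by (simp add: inner_simps inner_commute algebra_simps) (simp add: field_simps)

lemma idB5:
  fixes z v u :: "'a::real_inner"
  shows "- inner z u = - inner z v + 3/4 * (norm (v - u))\<^sup>2 - 3/4 * (norm (v - (2/3) *\<^sub>R z - u))\<^sup>2
     + 1/3 * (norm z)\<^sup>2"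
  unfolding power2_norm_eq_inner by (simp add: inner_simps inner_commute algebra_simps)


lemma comb_real:
  fixes J1 K2 K3 K4 K5 \<gamma> \<eta> nxu nwu nxpu d c a ap ocr Ie1 Ie2 nvu nvnu ne Nq nwpu Izv nvpu nvpnu nz dx cw :: real
  assumes i1: "J1 = (1-\<gamma>)/2 * nxu + \<gamma>/2 * nwu + (- (1-\<gamma>)/2 * nxpu + K4) - (1-\<gamma>)/2 * d - \<gamma>/2 * c"
    and i2: "K2 = \<eta> * ap - \<eta> * a - \<eta> * ocr + K3"
    and i3: "K3 = - \<eta> * Ie1 - \<eta> * Ie2 + 1/4 * nvu - 1/4 * nvnu + \<eta>\<^sup>2 * ne"
    and i4: "K4 = (1-\<gamma>)/2 * nwu - 1/2 * nwpu + Nq + K5"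
    and i5: "K5 = - Izv + 3/4 * nvpu - 3/4 * nvpnu + 1/3 * nz"
  shows "J1 + K2 =
     ((1-\<gamma>)/2 * nxu + 1/2 * nwu - \<eta> * a + 1/8 * dx + \<gamma>/16 * cw + 1/4 * nvu + 3/4 * nvpu)
   - ((1-\<gamma>)/2 * nxpu + 1/2 * nwpu - \<eta> * ap + 1/8 * d + \<gamma>/16 * c + 1/4 * nvnu + 3/4 * nvpnu)
   + (- (1-\<gamma>)/2 * d - \<gamma>/2 * c - \<eta> * ocr - \<eta> * Ie1 - \<eta> * Ie2 + \<eta>\<^sup>2 * ne + Nq - Izv + 1/3 * nz
      - 1/8 * dx - \<gamma>/16 * cw + 1/8 * d + \<gamma>/16 * c)"
  unfolding i1 i2 i3 i4 i5 by (simp add: field_simps)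

locale omm_loc = gfun g for g :: "'a::euclidean_space \<Rightarrow> ereal" +
  fixes Fs :: "nat \<Rightarrow> 'a \<Rightarrow> 'a" and M b :: nat and Ls :: "nat \<Rightarrow> real" and L Lbar \<gamma> \<eta> :: real
  assumes M_pos: "M \<ge> 1" and b_pos: "b \<ge> 1" and L_pos: "L > 0"
    and F_lip: "L-lipschitz_on UNIV (avg_op M Fs)"
    and Fm_lip: "\<And>m. m < M \<Longrightarrow> (Ls m)-lipschitz_on UNIV (Fs m)"
    and Lbar_def: "Lbar = sqrt ((1 / real M) * (\<Sum>m<M. (Ls m)\<^sup>2))"
    and Lbar_pos: "Lbar > 0"
    and \<gamma>_pos: "0 < \<gamma>" and \<gamma>_le: "\<gamma> \<le> 1 / 16"
    and \<eta>_def: "\<eta> = min (sqrt (\<gamma> * real b) / (8 * Lbar)) (1 / (8 * L))"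
    and F_mono: "monotone_op (avg_op M Fs)"
begin

abbreviation F where "F \<equiv> avg_op M Fs"

lemma eta_pos: "\<eta> > 0"
  using \<gamma>_pos b_pos Lbar_pos L_pos by (simp add: \<eta>_def)

lemma etaL: "\<eta> * L \<le> 1/8"
proof -
  have "\<eta> \<le> 1 / (8 * L)" by (simp add: \<eta>_def)
  hence "\<eta> * L \<le> 1 / (8 * L) * L" using L_pos by (intro mult_right_mono) auto
  also have "1 / (8 * L) * L = 1/8" using L_pos by simp
  finally show ?thesis .
qed

lemma etaLbar: "\<eta>\<^sup>2 * Lbar\<^sup>2 \<le> \<gamma> * real b / 64"
proof -
  have "\<eta> \<le> sqrt (\<gamma> * real b) / (8 * Lbar)" by (simp add: \<eta>_def)
  hence "\<eta> * Lbar \<le> sqrt (\<gamma> * real b) / 8" using Lbar_pos by (simp add: field_simps)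
  hence "(\<eta> * Lbar)\<^sup>2 \<le> (sqrt (\<gamma> * real b) / 8)\<^sup>2"
    using eta_pos Lbar_pos by (intro power_mono) auto
  also have "\<dots> = \<gamma> * real b / 64" using \<gamma>_pos by (simp add: power_divide)
  finally show ?thesis by (simp add: power_mult_distrib)
qed

lemma F_lip': "norm (F x - F y) \<le> L * norm (x - y)"
  using F_lip unfolding lipschitz_on_def by (simp add: dist_norm)

lemma Fm_lip': "m < M \<Longrightarrow> norm (Fs m x - Fs m y) \<le> Ls m * norm (x - y)"
  using Fm_lip unfolding lipschitz_on_def by (simp add: dist_norm)

definition gr :: "'a \<Rightarrow> real" where "gr x = real_of_ereal (g x)"

definition Y :: "nat \<Rightarrow> 'a \<Rightarrow> 'a \<Rightarrow> 'a \<Rightarrow> 'a" where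
  "Y j x xp wp = (Fs j x - Fs j wp) + (Fs j x - Fs j xp)"

definition Delta :: "'a \<Rightarrow> 'a \<Rightarrow> 'a \<Rightarrow> nat list \<Rightarrow> 'a" where
  "Delta x xp wp S = (1 / real b) *\<^sub>R (\<Sum>j\<leftarrow>S. Y j x xp wp) + F wp"

definition err :: "'a \<Rightarrow> 'a \<Rightarrow> 'a \<Rightarrow> nat list \<Rightarrow> 'a" where
  "err x xp wp S = (1 / real b) *\<^sub>R (\<Sum>j\<leftarrow>S. Y j x xp wp) - (F x - F wp + (F x - F xp))"

lemma Delta_eq: "Delta x xp wp S = 2 *\<^sub>R F x - F xp + err x xp wp S"
  by (simp add: Delta_def err_def algebra_simps scaleR_2)

definition xnew :: "'a \<Rightarrow> 'a \<Rightarrow> 'a \<Rightarrow> 'a \<Rightarrow> nat list \<Rightarrow> 'a" where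
  "xnew xp x wp w S = prox \<eta> g (x + \<gamma> *\<^sub>R (w - x) - \<eta> *\<^sub>R Delta x xp wp S)"

definition xtil :: "'a \<Rightarrow> 'a \<Rightarrow> 'a \<Rightarrow> 'a" where
  "xtil xp x w = prox \<eta> g (x + \<gamma> *\<^sub>R (w - x) - \<eta> *\<^sub>R (2 *\<^sub>R F x - F xp))"

definition wnew :: "'a \<Rightarrow> 'a \<Rightarrow> 'a \<Rightarrow> 'a \<Rightarrow> nat list \<Rightarrow> bool \<Rightarrow> 'a" where
  "wnew xp x wp w S c = (if c then xnew xp x wp w S else w)"

lemma step_eq: "omm_step M Fs g \<eta> \<gamma> b (xp, x, wp, w) (S, c) = (x, xnew xp x wp w S, w, wnew xp x wp w S c)"
  by (simp add: omm_step_def xnew_def wnew_def Delta_def Y_def Let_def)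

definition zeta :: "'a \<Rightarrow> 'a \<Rightarrow> 'a \<Rightarrow> 'a" where
  "zeta x' w w' = w' - \<gamma> *\<^sub>R x' - (1-\<gamma>) *\<^sub>R w"

definition Nn :: "'a \<Rightarrow> 'a \<Rightarrow> 'a \<Rightarrow> real" where
  "Nn x' w w' = ((norm w')\<^sup>2 - \<gamma> * (norm x')\<^sup>2 - (1-\<gamma>) * (norm w)\<^sup>2) / 2"

definition Psi :: "'a \<Rightarrow> 'a \<Rightarrow> 'a \<Rightarrow> 'a \<Rightarrow> 'a \<Rightarrow> 'a \<Rightarrow> 'a \<Rightarrow> real" where
  "Psi xp x wp w v v' u = (1-\<gamma>)/2 * (norm (x - u))\<^sup>2 + 1/2 * (norm (w - u))\<^sup>2
     - \<eta> * inner (F x - F xp) (x - u) + 1/8 * (norm (x - xp))\<^sup>2 + \<gamma>/16 * (norm (x - wp))\<^sup>2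
     + 1/4 * (norm (v - u))\<^sup>2 + 3/4 * (norm (v' - u))\<^sup>2"

definition rho0 :: "'a \<Rightarrow> 'a \<Rightarrow> 'a \<Rightarrow> 'a \<Rightarrow> 'a \<Rightarrow> 'a \<Rightarrow> 'a \<Rightarrow> 'a \<Rightarrow> 'a \<Rightarrow> 'a \<Rightarrow> real" where
  "rho0 xp x wp w v v' x' w' e xt =
     - (1-\<gamma>)/2 * (norm (x' - x))\<^sup>2 - \<gamma>/2 * (norm (x' - w))\<^sup>2
     - \<eta> * inner (F x - F xp) (x' - x) - \<eta> * inner e (x' - xt) - \<eta> * inner e (xt - v)
     + \<eta>\<^sup>2 * (norm e)\<^sup>2 + Nn x' w w' - inner (zeta x' w w') v' + 1/3 * (norm (zeta x' w w'))\<^sup>2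
     - 1/8 * (norm (x - xp))\<^sup>2 - \<gamma>/16 * (norm (x - wp))\<^sup>2 + 1/8 * (norm (x' - x))\<^sup>2
     + \<gamma>/16 * (norm (x' - w))\<^sup>2"

definition rho :: "'a \<Rightarrow> 'a \<Rightarrow> 'a \<Rightarrow> 'a \<Rightarrow> 'a \<Rightarrow> 'a \<Rightarrow> nat list \<Rightarrow> bool \<Rightarrow> real" where
  "rho xp x wp w v v' S c = rho0 xp x wp w v v' (xnew xp x wp w S) (wnew xp x wp w S c) (err x xp wp S) (xtil xp x w)"

lemma step_ineq0:
  fixes xp x wp w v v' u x' w' e xt :: 'a
  assumes gu: "g u = ereal gu" and x': "x' = prox \<eta> g (x + \<gamma> *\<^sub>R (w - x) - \<eta> *\<^sub>R (2 *\<^sub>R F x - F xp + e))"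
  shows "\<eta> * (inner (F x') (x' - u) + gr x' - gu) \<le>
     Psi xp x wp w v v' u - Psi x x' w w' (v + (2 * \<eta>) *\<^sub>R e) (v' - (2/3) *\<^sub>R zeta x' w w') u
     + rho0 xp x wp w v v' x' w' e xt"
proof -
  define A where "A = x + \<gamma> *\<^sub>R (w - x) - \<eta> *\<^sub>R (2 *\<^sub>R F x - F xp + e)"
  have vi: "\<eta> * gr x' + inner (A - x') (u - x') \<le> \<eta> * gu"
    using prox_vi[OF eta_pos gu, of A] x' by (simp add: A_def gr_def)
  have e0: "inner (A - x') (u - x') = - inner (A - x') (x' - u)"
    by (metis inner_minus_right minus_diff_eq)
  have e1: "inner (A - x') (x' - u) + \<eta> * inner (F x') (x' - u) =
      inner (x + \<gamma> *\<^sub>R (w - x) - x') (x' - u) + \<eta> * inner (F x' - (2 *\<^sub>R F x - F xp + e)) (x' - u)"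
    unfolding A_def by (simp add: inner_simps algebra_simps)
  have dist: "\<eta> * (inner (F x') (x' - u) + gr x' - gu) = \<eta> * inner (F x') (x' - u) + \<eta> * gr x' - \<eta> * gu"
    by (simp add: algebra_simps)
  have main: "\<eta> * (inner (F x') (x' - u) + gr x' - gu) \<le>
      inner (x + \<gamma> *\<^sub>R (w - x) - x') (x' - u) + \<eta> * inner (F x' - (2 *\<^sub>R F x - F xp + e)) (x' - u)"
    using vi e0 e1 dist by linarith
  have i1: "inner (x + \<gamma> *\<^sub>R (w - x) - x') (x' - u) =
    (1-\<gamma>)/2 * (norm (x - u))\<^sup>2 + \<gamma>/2 * (norm (w - u))\<^sup>2 + (- (1-\<gamma>)/2 * (norm (x' - u))\<^sup>2 + (- \<gamma>/2 * (norm (x' - u))\<^sup>2))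
    - (1-\<gamma>)/2 * (norm (x' - x))\<^sup>2 - \<gamma>/2 * (norm (x' - w))\<^sup>2"
    unfolding power2_norm_eq_inner by (simp add: inner_simps inner_commute algebra_simps) (simp add: field_simps)
  have i2: "\<eta> * inner (F x' - (2 *\<^sub>R F x - F xp + e)) (x' - u) =
    \<eta> * inner (F x' - F x) (x' - u) - \<eta> * inner (F x - F xp) (x - u) - \<eta> * inner (F x - F xp) (x' - x)
    + (- \<eta> * inner e (x' - u))"
    by (simp add: inner_simps inner_commute algebra_simps)
  have i3: "- \<eta> * inner e (x' - u) = - \<eta> * inner e (x' - xt) - \<eta> * inner e (xt - v)
     + 1/4 * (norm (v - u))\<^sup>2 - 1/4 * (norm (v + (2 * \<eta>) *\<^sub>R e - u))\<^sup>2 + \<eta>\<^sup>2 * (norm e)\<^sup>2"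
    by (rule idB3)
  have i4: "- \<gamma>/2 * (norm (x' - u))\<^sup>2 = (1-\<gamma>)/2 * (norm (w - u))\<^sup>2 - 1/2 * (norm (w' - u))\<^sup>2
    + Nn x' w w' + (- inner (zeta x' w w') u)"
    unfolding Nn_def zeta_def power2_norm_eq_inner by (simp add: inner_simps inner_commute algebra_simps) (simp add: field_simps)
  have i5: "- inner (zeta x' w w') u = - inner (zeta x' w w') v' + 3/4 * (norm (v' - u))\<^sup>2
     - 3/4 * (norm (v' - (2/3) *\<^sub>R zeta x' w w' - u))\<^sup>2 + 1/3 * (norm (zeta x' w w'))\<^sup>2"
    by (rule idB5)
  have eq: "inner (x + \<gamma> *\<^sub>R (w - x) - x') (x' - u) + \<eta> * inner (F x' - (2 *\<^sub>R F x - F xp + e)) (x' - u) =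
     Psi xp x wp w v v' u - Psi x x' w w' (v + (2 * \<eta>) *\<^sub>R e) (v' - (2/3) *\<^sub>R zeta x' w w') u
     + rho0 xp x wp w v v' x' w' e xt"
    unfolding Psi_def rho0_def by (rule comb_real[OF i1 i2 i3 i4 i5])
  show ?thesis using main eq by simp
qed

end


lemma exp_bind:
  fixes h :: "'b \<Rightarrow> real"
  assumes "finite (set_pmf p)" "\<And>x. x \<in> set_pmf p \<Longrightarrow> finite (set_pmf (f x))"
  shows "measure_pmf.expectation (p \<bind> f) h = measure_pmf.expectation p (\<lambda>x. measure_pmf.expectation (f x) h)"
proof -
  have "measure_pmf.expectation (p \<bind> f) h = (\<Sum>a\<in>set_pmf p. pmf p a *\<^sub>R measure_pmf.expectation (f a) h)"
    using assms by (intro pmf_expectation_bind) auto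
  also have "\<dots> = measure_pmf.expectation p (\<lambda>x. measure_pmf.expectation (f x) h)"
    using assms by (intro integral_measure_pmf[symmetric]) auto
  finally show ?thesis .
qed

lemma exp_sum_repr:
  fixes f :: "'b \<Rightarrow> real"
  assumes "finite (set_pmf p)"
  shows "measure_pmf.expectation p f = (\<Sum>a\<in>set_pmf p. pmf p a * f a)"
  using integral_measure_pmf[OF assms, of p f] by simp

lemma exp_mono:
  fixes f h :: "'b \<Rightarrow> real"
  assumes "finite (set_pmf p)" "\<And>x. x \<in> set_pmf p \<Longrightarrow> f x \<le> h x"
  shows "measure_pmf.expectation p f \<le> measure_pmf.expectation p h"
  unfolding exp_sum_repr[OF assms(1)] using assms(2)
  by (intro sum_mono mult_left_mono) auto

lemma exp_const: "measure_pmf.expectation p (\<lambda>_. c::real) = c"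
  by simp

lemma exp_add:
  fixes f h :: "'b \<Rightarrow> real"
  assumes "finite (set_pmf p)"
  shows "measure_pmf.expectation p (\<lambda>x. f x + h x) = measure_pmf.expectation p f + measure_pmf.expectation p h"
  unfolding exp_sum_repr[OF assms] by (simp add: sum.distrib algebra_simps)

lemma exp_cmult:
  fixes f :: "'b \<Rightarrow> real"
  assumes "finite (set_pmf p)"
  shows "measure_pmf.expectation p (\<lambda>x. c * f x) = c * measure_pmf.expectation p f"
  unfolding exp_sum_repr[OF assms] by (simp add: sum_distrib_left algebra_simps)

lemma exp_sum:
  fixes f :: "nat \<Rightarrow> 'b \<Rightarrow> real"
  assumes "finite (set_pmf p)"
  shows "measure_pmf.expectation p (\<lambda>x. \<Sum>k<K. f k x) = (\<Sum>k<K. measure_pmf.expectation p (f k))"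
  unfolding exp_sum_repr[OF assms] by (simp add: sum_distrib_left sum.swap[of _ "{..<K}"])

lemma finite_replicate_pmf:
  assumes "finite (set_pmf p)" shows "finite (set_pmf (replicate_pmf n p))"
proof -
  have "set_pmf (replicate_pmf n p) = {xs. set xs \<subseteq> set_pmf p \<and> length xs = n}"
    by (auto simp: set_replicate_pmf)
  thus ?thesis using finite_lists_length_eq[OF assms] by simp
qed

lemma exp_pair:
  fixes f :: "'b \<times> 'c \<Rightarrow> real"
  assumes "finite (set_pmf A)" "finite (set_pmf B)"
  shows "measure_pmf.expectation (pair_pmf A B) f =
     measure_pmf.expectation A (\<lambda>a. measure_pmf.expectation B (\<lambda>b. f (a, b)))"
  unfolding pair_pmf_def using assms
  by (simp add: exp_bind)

lemma exp_replicate_Suc: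
  fixes f :: "'b list \<Rightarrow> real"
  assumes "finite (set_pmf p)"
  shows "measure_pmf.expectation (replicate_pmf (Suc n) p) f =
     measure_pmf.expectation p (\<lambda>x. measure_pmf.expectation (replicate_pmf n p) (\<lambda>xs. f (x # xs)))"
  using assms finite_replicate_pmf[OF assms] by (simp add: exp_bind)


lemma exp_swap:
  fixes f :: "'b \<Rightarrow> 'c \<Rightarrow> real"
  assumes "finite (set_pmf p)" "finite (set_pmf q)"
  shows "measure_pmf.expectation p (\<lambda>x. measure_pmf.expectation q (\<lambda>y. f x y)) =
         measure_pmf.expectation q (\<lambda>y. measure_pmf.expectation p (\<lambda>x. f x y))"
  unfolding exp_sum_repr[OF assms(1)] exp_sum_repr[OF assms(2)]
  by (simp add: sum_distrib_left sum.swap[of _ "set_pmf p"] algebra_simps)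

lemma finite_U: "M \<ge> 1 \<Longrightarrow> finite (set_pmf (pmf_of_set {..<(M::nat)}))"
  by (subst set_pmf_of_set) (auto simp: lessThan_empty_iff)

lemma exp_U:
  assumes "M \<ge> 1"
  shows "measure_pmf.expectation (pmf_of_set {..<M}) f = (\<Sum>j<M. f j) / real M"
  using assms by (subst integral_pmf_of_set) (auto simp: lessThan_empty_iff)

lemma exp_sumlist:
  fixes \<phi> :: "nat \<Rightarrow> real"
  assumes M: "M \<ge> 1"
  shows "measure_pmf.expectation (replicate_pmf n (pmf_of_set {..<M})) (\<lambda>S. \<Sum>j\<leftarrow>S. \<phi> j)
        = real n * (\<Sum>j<M. \<phi> j) / real M"
proof (induction n)
  case 0 thus ?case by simp
next
  case (Suc n)
  have "measure_pmf.expectation (replicate_pmf (Suc n) (pmf_of_set {..<M})) (\<lambda>S. \<Sum>j\<leftarrow>S. \<phi> j)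
      = measure_pmf.expectation (pmf_of_set {..<M}) (\<lambda>x. \<phi> x + real n * (\<Sum>j<M. \<phi> j) / real M)"
    using finite_U[OF M] finite_replicate_pmf[OF finite_U[OF M], of n] Suc
    by (subst exp_replicate_Suc[OF finite_U[OF M]]) (simp add: exp_add)
  also have "\<dots> = measure_pmf.expectation (pmf_of_set {..<M}) \<phi> + real n * (\<Sum>j<M. \<phi> j) / real M"
    using exp_add[OF finite_U[OF M], of \<phi> "\<lambda>_. real n * (\<Sum>j<M. \<phi> j) / real M"] by simp
  also have "\<dots> = (\<Sum>j<M. \<phi> j) / real M + real n * (\<Sum>j<M. \<phi> j) / real M"
    by (simp add: exp_U[OF M])
  finally show ?case using M by (simp add: field_simps)
qed

lemma inner_sum_list_left: "inner (\<Sum>j\<leftarrow>S. Z j) a = (\<Sum>j\<leftarrow>S. inner (Z j) a)"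
  by (induction S) (auto simp: inner_add_left)

lemma exp_normsq:
  fixes Z :: "nat \<Rightarrow> 'v::real_inner"
  assumes M: "M \<ge> 1" and Z0: "(\<Sum>j<M. Z j) = 0"
  shows "measure_pmf.expectation (replicate_pmf n (pmf_of_set {..<M})) (\<lambda>S. (norm (\<Sum>j\<leftarrow>S. Z j))\<^sup>2)
        = real n * (\<Sum>j<M. (norm (Z j))\<^sup>2) / real M"
proof (induction n)
  case 0 thus ?case by simp
next
  case (Suc n)
  define U where "U = pmf_of_set {..<M}"
  define R where "R = replicate_pmf n U"
  have fU: "finite (set_pmf U)" unfolding U_def by (rule finite_U[OF M])
  have fR: "finite (set_pmf R)" unfolding R_def by (rule finite_replicate_pmf[OF fU])
  have expand: "(norm (Z x + (\<Sum>j\<leftarrow>xs. Z j)))\<^sup>2 = (norm (Z x))\<^sup>2 + 2 * inner (Z x) (\<Sum>j\<leftarrow>xs. Z j) + (norm (\<Sum>j\<leftarrow>xs. Z j))\<^sup>2" for x xs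
    unfolding power2_norm_eq_inner by (simp add: inner_simps inner_commute)
  have cross: "measure_pmf.expectation U (\<lambda>x. measure_pmf.expectation R (\<lambda>xs. inner (Z x) (\<Sum>j\<leftarrow>xs. Z j))) = 0"
  proof -
    have "measure_pmf.expectation U (\<lambda>x. measure_pmf.expectation R (\<lambda>xs. inner (Z x) (\<Sum>j\<leftarrow>xs. Z j)))
        = measure_pmf.expectation R (\<lambda>xs. measure_pmf.expectation U (\<lambda>x. inner (Z x) (\<Sum>j\<leftarrow>xs. Z j)))"
      by (rule exp_swap[OF fU fR])
    also have "\<dots> = measure_pmf.expectation R (\<lambda>xs. 0)"
    proof (intro arg_cong[where f="measure_pmf.expectation R"] ext)
      fix xs
      have "measure_pmf.expectation U (\<lambda>x. inner (Z x) (\<Sum>j\<leftarrow>xs. Z j)) = (\<Sum>j<M. inner (Z j) (\<Sum>j\<leftarrow>xs. Z j)) / real M"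
        unfolding U_def by (rule exp_U[OF M])
      also have "(\<Sum>j<M. inner (Z j) (\<Sum>j\<leftarrow>xs. Z j)) = inner (\<Sum>j<M. Z j) (\<Sum>j\<leftarrow>xs. Z j)"
        by (simp add: inner_sum_left)
      finally show "measure_pmf.expectation U (\<lambda>x. inner (Z x) (\<Sum>j\<leftarrow>xs. Z j)) = 0" using Z0 by simp
    qed
    finally show ?thesis by simp
  qed
  have "measure_pmf.expectation (replicate_pmf (Suc n) U) (\<lambda>S. (norm (\<Sum>j\<leftarrow>S. Z j))\<^sup>2)
     = measure_pmf.expectation U (\<lambda>x. measure_pmf.expectation R (\<lambda>xs. (norm (Z x + (\<Sum>j\<leftarrow>xs. Z j)))\<^sup>2))"
    unfolding R_def by (subst exp_replicate_Suc[OF fU]) simp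
  also have "\<dots> = measure_pmf.expectation U (\<lambda>x. (norm (Z x))\<^sup>2 + 2 * measure_pmf.expectation R (\<lambda>xs. inner (Z x) (\<Sum>j\<leftarrow>xs. Z j))
         + real n * (\<Sum>j<M. (norm (Z j))\<^sup>2) / real M)"
    unfolding expand using fR Suc by (simp add: exp_add exp_cmult R_def U_def)
  also have "\<dots> = measure_pmf.expectation U (\<lambda>x. (norm (Z x))\<^sup>2) + 2 * measure_pmf.expectation U (\<lambda>x. measure_pmf.expectation R (\<lambda>xs. inner (Z x) (\<Sum>j\<leftarrow>xs. Z j)))
         + real n * (\<Sum>j<M. (norm (Z j))\<^sup>2) / real M"
    using fU by (simp add: exp_add exp_cmult)
  also have "\<dots> = measure_pmf.expectation U (\<lambda>x. (norm (Z x))\<^sup>2) + real n * (\<Sum>j<M. (norm (Z j))\<^sup>2) / real M"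
    using cross by simp
  also have "\<dots> = (\<Sum>j<M. (norm (Z j))\<^sup>2) / real M + real n * (\<Sum>j<M. (norm (Z j))\<^sup>2) / real M"
    unfolding U_def exp_U[OF M] by simp
  finally show ?case using M by (simp add: U_def field_simps)
qed


lemma exp_cong_supp:
  fixes f h :: "'b \<Rightarrow> real"
  assumes "finite (set_pmf p)" "\<And>x. x \<in> set_pmf p \<Longrightarrow> f x = h x"
  shows "measure_pmf.expectation p f = measure_pmf.expectation p h"
  unfolding exp_sum_repr[OF assms(1)] using assms(2) by (intro sum.cong) auto

lemma sum_list_minus_const:
  fixes f :: "nat \<Rightarrow> 'v::real_vector"
  shows "(\<Sum>j\<leftarrow>S. f j - c) = (\<Sum>j\<leftarrow>S. f j) - real (length S) *\<^sub>R c"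
  by (induction S) (auto simp: algebra_simps)

context omm_loc begin

definition Ybar :: "'a \<Rightarrow> 'a \<Rightarrow> 'a \<Rightarrow> 'a" where
  "Ybar x xp wp = F x - F wp + (F x - F xp)"

lemma sum_Fs: "(\<Sum>m<M. Fs m z) = real M *\<^sub>R F z"
  using M_pos by (simp add: avg_op_def)

lemma sum_Y: "(\<Sum>j<M. Y j x xp wp) = real M *\<^sub>R Ybar x xp wp"
  by (simp add: Y_def Ybar_def sum.distrib sum_subtractf sum_Fs algebra_simps)

lemma sum_Z: "(\<Sum>j<M. Y j x xp wp - Ybar x xp wp) = 0"
  by (simp add: sum_subtractf sum_Y sum_constant_scaleR)

lemma err_Z:
  assumes "length S = b"
  shows "err x xp wp S = (1 / real b) *\<^sub>R (\<Sum>j\<leftarrow>S. Y j x xp wp - Ybar x xp wp)"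
  using assms b_pos unfolding err_def sum_list_minus_const Ybar_def[symmetric]
  by (simp add: algebra_simps)

abbreviation U where "U \<equiv> pmf_of_set {..<M}"
abbreviation RS where "RS \<equiv> replicate_pmf b U"

lemma fU: "finite (set_pmf U)" by (rule finite_U[OF M_pos])
lemma fRS: "finite (set_pmf RS)" by (rule finite_replicate_pmf[OF fU])
lemma RS_len: "S \<in> set_pmf RS \<Longrightarrow> length S = b"
  by (simp add: set_replicate_pmf)
lemma RS_set: "S \<in> set_pmf RS \<Longrightarrow> set S \<subseteq> {..<M}"
  using M_pos by (auto simp: set_replicate_pmf set_pmf_of_set lessThan_empty_iff)

lemma exp_err_inner: "measure_pmf.expectation RS (\<lambda>S. inner (err x xp wp S) a) = 0"
proof -
  have "measure_pmf.expectation RS (\<lambda>S. inner (err x xp wp S) a)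
      = measure_pmf.expectation RS (\<lambda>S. (1 / real b) * (\<Sum>j\<leftarrow>S. inner (Y j x xp wp - Ybar x xp wp) a))"
    using fRS by (intro exp_cong_supp) (auto simp: err_Z RS_len inner_sum_list_left)
  also have "\<dots> = (1 / real b) * (real b * (\<Sum>j<M. inner (Y j x xp wp - Ybar x xp wp) a) / real M)"
    by (simp add: exp_cmult[OF fRS] exp_sumlist[OF M_pos])
  also have "(\<Sum>j<M. inner (Y j x xp wp - Ybar x xp wp) a) = inner (\<Sum>j<M. Y j x xp wp - Ybar x xp wp) a"
    by (simp add: inner_sum_left)
  also have "\<dots> = 0" by (simp add: sum_Z)
  finally show ?thesis by simp
qed

lemma Lbar_sq: "Lbar\<^sup>2 = (\<Sum>m<M. (Ls m)\<^sup>2) / real M"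
proof -
  have "(\<Sum>m<M. (Ls m)\<^sup>2) \<ge> 0" by (intro sum_nonneg) auto
  thus ?thesis unfolding Lbar_def by simp
qed

lemma normY: "m < M \<Longrightarrow> (norm (Y m x xp wp))\<^sup>2 \<le> 2 * (Ls m)\<^sup>2 * ((norm (x - wp))\<^sup>2 + (norm (x - xp))\<^sup>2)"
proof -
  assume m: "m < M"
  have Lm: "Ls m \<ge> 0" using Fm_lip[OF m] unfolding lipschitz_on_def by simp
  have "norm (Y m x xp wp) \<le> norm (Fs m x - Fs m wp) + norm (Fs m x - Fs m xp)"
    unfolding Y_def by (rule norm_triangle_ineq)
  also have "\<dots> \<le> Ls m * norm (x - wp) + Ls m * norm (x - xp)"
    using Fm_lip'[OF m] by (intro add_mono) auto
  finally have h: "norm (Y m x xp wp) \<le> Ls m * (norm (x - wp) + norm (x - xp))" by (simp add: algebra_simps)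
  have "(norm (Y m x xp wp))\<^sup>2 \<le> (Ls m * (norm (x - wp) + norm (x - xp)))\<^sup>2"
    using h by (intro power_mono) auto
  also have "\<dots> = (Ls m)\<^sup>2 * (norm (x - wp) + norm (x - xp))\<^sup>2" by (simp add: power_mult_distrib)
  also have "\<dots> \<le> (Ls m)\<^sup>2 * (2 * ((norm (x - wp))\<^sup>2 + (norm (x - xp))\<^sup>2))"
  proof (intro mult_left_mono)
    show "(norm (x - wp) + norm (x - xp))\<^sup>2 \<le> 2 * ((norm (x - wp))\<^sup>2 + (norm (x - xp))\<^sup>2)"
      using sum_squares_ge_zero[of "norm (x - wp) - norm (x - xp)" 0]
      by (simp add: power2_eq_square algebra_simps)
  qed auto
  finally show ?thesis by (simp add: algebra_simps)
qed

lemma exp_err_sq: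
  "measure_pmf.expectation RS (\<lambda>S. (norm (err x xp wp S))\<^sup>2)
     \<le> 2 * Lbar\<^sup>2 / real b * ((norm (x - wp))\<^sup>2 + (norm (x - xp))\<^sup>2)"
proof -
  define Z where "Z j = Y j x xp wp - Ybar x xp wp" for j
  define Yb where "Yb = Ybar x xp wp"
  define cc where "cc = (norm (x - wp))\<^sup>2 + (norm (x - xp))\<^sup>2"
  have "measure_pmf.expectation RS (\<lambda>S. (norm (err x xp wp S))\<^sup>2)
      = measure_pmf.expectation RS (\<lambda>S. (1 / real b)\<^sup>2 * (norm (\<Sum>j\<leftarrow>S. Z j))\<^sup>2)"
    using fRS by (intro exp_cong_supp) (auto simp: err_Z RS_len Z_def power_mult_distrib power_divide)
  also have "\<dots> = (1 / real b)\<^sup>2 * (real b * (\<Sum>j<M. (norm (Z j))\<^sup>2) / real M)"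
    using sum_Z by (simp add: exp_cmult[OF fRS] exp_normsq[OF M_pos] Z_def)
  also have "(\<Sum>j<M. (norm (Z j))\<^sup>2) = (\<Sum>j<M. (norm (Y j x xp wp))\<^sup>2) - real M * (norm Yb)\<^sup>2"
  proof -
    have "(\<Sum>j<M. (norm (Z j))\<^sup>2) = (\<Sum>j<M. (norm (Y j x xp wp))\<^sup>2 - 2 * inner (Y j x xp wp) Yb + (norm Yb)\<^sup>2)"
      unfolding Z_def Yb_def power2_norm_eq_inner by (intro sum.cong) (auto simp: inner_simps inner_commute)
    also have "\<dots> = (\<Sum>j<M. (norm (Y j x xp wp))\<^sup>2) - 2 * inner (\<Sum>j<M. Y j x xp wp) Yb + real M * (norm Yb)\<^sup>2"
      by (simp add: sum.distrib sum_subtractf inner_sum_left sum_distrib_left)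
    also have "\<dots> = (\<Sum>j<M. (norm (Y j x xp wp))\<^sup>2) - real M * (norm Yb)\<^sup>2"
      unfolding sum_Y Yb_def by (simp add: power2_norm_eq_inner)
    finally show ?thesis .
  qed
  also have "\<dots> \<le> (\<Sum>j<M. 2 * (Ls j)\<^sup>2 * cc)"
  proof -
    have "(\<Sum>j<M. (norm (Y j x xp wp))\<^sup>2) \<le> (\<Sum>j<M. 2 * (Ls j)\<^sup>2 * cc)"
      unfolding cc_def by (intro sum_mono normY) auto
    thus ?thesis by (smt (verit) zero_le_power2 of_nat_0_le_iff mult_nonneg_nonneg)
  qed
  also have "(\<Sum>j<M. 2 * (Ls j)\<^sup>2 * cc) = 2 * cc * (real M * Lbar\<^sup>2)"
    using M_pos by (simp add: Lbar_sq sum_distrib_left[symmetric] sum_distrib_right[symmetric] algebra_simps)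
  finally have "measure_pmf.expectation RS (\<lambda>S. (norm (err x xp wp S))\<^sup>2)
      \<le> (1 / real b)\<^sup>2 * (real b * (2 * cc * (real M * Lbar\<^sup>2)) / real M)"
    by (simp add: mult_left_mono divide_right_mono)
  also have "\<dots> = 2 * Lbar\<^sup>2 / real b * cc" using M_pos b_pos by (simp add: field_simps power2_eq_square)
  finally show ?thesis by (simp add: cc_def)
qed

end

lemma neg_scaled_inner:
  fixes a b :: "'v::real_inner"
  assumes "(\<eta>::real) \<ge> 0" shows "- \<eta> * inner a b \<le> \<eta> * (norm a * norm b)"
proof -
  have "- inner a b \<le> norm a * norm b" using Cauchy_Schwarz_ineq2[of a b] by linarith
  from mult_left_mono[OF this assms] show ?thesis by simp
qed

context omm_loc begin

definition coin :: "'a \<Rightarrow> 'a \<Rightarrow> 'a \<Rightarrow> bool \<Rightarrow> real" where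
  "coin x' w v' c = Nn x' w (if c then x' else w) - inner (zeta x' w (if c then x' else w)) v'
     + 1/3 * (norm (zeta x' w (if c then x' else w)))\<^sup>2"

lemma coin_avg: "coin x' w v' True * \<gamma> + coin x' w v' False * (1 - \<gamma>) = \<gamma> * (1 - \<gamma>) / 3 * (norm (x' - w))\<^sup>2"
proof -
  have z1: "zeta x' w x' = (1 - \<gamma>) *\<^sub>R (x' - w)" by (simp add: zeta_def algebra_simps)
  have z2: "zeta x' w w = (- \<gamma>) *\<^sub>R (x' - w)" by (simp add: zeta_def algebra_simps)
  show ?thesis unfolding coin_def Nn_def zeta_def power2_norm_eq_inner
    by (simp add: inner_simps inner_commute algebra_simps) (simp add: field_simps)
qed

lemma exp_coin: "measure_pmf.expectation (bernoulli_pmf \<gamma>) (coin x' w v') = \<gamma> * (1 - \<gamma>) / 3 * (norm (x' - w))\<^sup>2"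
  using \<gamma>_pos \<gamma>_le by (simp add: coin_avg)

lemma xnew_xtil: "norm (xnew xp x wp w S - xtil xp x w) \<le> \<eta> * norm (err x xp wp S)"
proof -
  have "norm (xnew xp x wp w S - xtil xp x w) \<le>
      norm ((x + \<gamma> *\<^sub>R (w - x) - \<eta> *\<^sub>R Delta x xp wp S) - (x + \<gamma> *\<^sub>R (w - x) - \<eta> *\<^sub>R (2 *\<^sub>R F x - F xp)))"
    unfolding xnew_def xtil_def by (rule prox_nonexp[OF eta_pos])
  also have "\<dots> = norm (\<eta> *\<^sub>R err x xp wp S)" unfolding Delta_eq by (simp add: algebra_simps)
  also have "\<dots> = \<eta> * norm (err x xp wp S)" using eta_pos by simp
  finally show ?thesis .
qed

lemma rho_bound:
  "rho xp x wp w v v' S c \<le> coin (xnew xp x wp w S) w v' c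
     - \<eta> * inner (err x xp wp S) (xtil xp x w - v) + 2 * (\<eta>\<^sup>2 * (norm (err x xp wp S))\<^sup>2)
     - 7 * \<gamma> / 16 * (norm (xnew xp x wp w S - w))\<^sup>2 - 1/16 * (norm (x - xp))\<^sup>2 - \<gamma>/16 * (norm (x - wp))\<^sup>2"
proof -
  define x' where "x' = xnew xp x wp w S"
  define e where "e = err x xp wp S"
  define xt where "xt = xtil xp x w"
  define d where "d = (norm (x' - x))\<^sup>2"
  define dx where "dx = (norm (x - xp))\<^sup>2"
  have o_b: "- \<eta> * inner (F x - F xp) (x' - x) \<le> 1/16 * dx + 1/16 * d"
  proof -
    have "- \<eta> * inner (F x - F xp) (x' - x) \<le> \<eta> * (norm (F x - F xp) * norm (x' - x))"
      using eta_pos by (intro neg_scaled_inner) simp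
    also have "\<dots> \<le> \<eta> * (L * norm (x - xp) * norm (x' - x))"
      using eta_pos F_lip'[of x xp] by (intro mult_left_mono mult_right_mono) auto
    also have "\<dots> = (\<eta> * L) * (norm (x - xp) * norm (x' - x))" by simp
    also have "\<dots> \<le> 1/8 * (norm (x - xp) * norm (x' - x))"
      using etaL by (intro mult_right_mono) auto
    also have "\<dots> \<le> 1/16 * dx + 1/16 * d"
      using sum_squares_ge_zero[of "norm (x - xp) - norm (x' - x)" 0] unfolding dx_def d_def
      by (simp add: power2_eq_square algebra_simps)
    finally show ?thesis .
  qed
  have e_b: "- \<eta> * inner e (x' - xt) \<le> \<eta>\<^sup>2 * (norm e)\<^sup>2"
  proof -
    have "- \<eta> * inner e (x' - xt) \<le> \<eta> * (norm e * norm (x' - xt))"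
      using eta_pos by (intro neg_scaled_inner) simp
    also have "\<dots> \<le> \<eta> * (norm e * (\<eta> * norm e))"
      using eta_pos xnew_xtil[of xp x wp w S] unfolding x'_def xt_def e_def
      by (intro mult_left_mono) auto
    finally show ?thesis by (simp add: power2_eq_square algebra_simps)
  qed
  have "- (1-\<gamma>)/2 + 3/16 \<le> 0" using \<gamma>_le by (simp add: field_simps)
  hence d_b: "(- (1-\<gamma>)/2 + 3/16) * d \<le> 0"
    unfolding d_def by (intro mult_nonpos_nonneg) auto
  have ident: "rho xp x wp w v v' S c = coin x' w v' c - \<eta> * inner e (xt - v) + \<eta>\<^sup>2 * (norm e)\<^sup>2
      - 7 * \<gamma> / 16 * (norm (x' - w))\<^sup>2 - 1/8 * dx - \<gamma>/16 * (norm (x - wp))\<^sup>2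
      + (- \<eta> * inner (F x - F xp) (x' - x)) + (- \<eta> * inner e (x' - xt)) + ((- (1-\<gamma>)/2 + 3/16) * d) - 1/16 * d"
    unfolding rho_def rho0_def coin_def wnew_def x'_def e_def xt_def d_def dx_def
    by (simp add: field_simps)
  show ?thesis using ident o_b e_b d_b unfolding x'_def e_def xt_def dx_def by linarith
qed

end

lemma exp_lin:
  fixes f h :: "'b \<Rightarrow> real"
  assumes "finite (set_pmf p)"
  shows "measure_pmf.expectation p (\<lambda>x. a * f x + c * h x + k) =
     a * measure_pmf.expectation p f + c * measure_pmf.expectation p h + k"
proof -
  have k: "(\<Sum>a\<in>set_pmf p. k * pmf p a) = k"
    using sum_pmf_eq_1[OF assms, of p] by (simp add: sum_distrib_left[symmetric])
  show ?thesis unfolding exp_sum_repr[OF assms] using k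
    by (simp add: sum.distrib sum_distrib_left algebra_simps)
qed

context omm_loc begin

abbreviation Q where "Q \<equiv> pair_pmf RS (bernoulli_pmf \<gamma>)"

lemma fB: "finite (set_pmf (bernoulli_pmf p))"
  by (rule finite_subset[of _ UNIV]) auto

lemma fQ: "finite (set_pmf Q)" using fRS fB by simp

lemma exp_rho: "measure_pmf.expectation Q (\<lambda>\<omega>. rho xp x wp w v v' (fst \<omega>) (snd \<omega>)) \<le> 0"
proof -
  define dx where "dx = (norm (x - xp))\<^sup>2"
  define cw where "cw = (norm (x - wp))\<^sup>2"
  define rest where "rest S = - \<eta> * inner (err x xp wp S) (xtil xp x w - v) + 2 * (\<eta>\<^sup>2 * (norm (err x xp wp S))\<^sup>2)
     - 7 * \<gamma> / 16 * (norm (xnew xp x wp w S - w))\<^sup>2 - 1/16 * dx - \<gamma>/16 * cw" for S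
  define rest2 where "rest2 S = - \<eta> * inner (err x xp wp S) (xtil xp x w - v) + 2 * \<eta>\<^sup>2 * (norm (err x xp wp S))\<^sup>2
     + (- 1/16 * dx - \<gamma>/16 * cw)" for S
  have step1: "measure_pmf.expectation (bernoulli_pmf \<gamma>) (\<lambda>c. rho xp x wp w v v' S c) \<le> rest2 S" for S
  proof -
    have "measure_pmf.expectation (bernoulli_pmf \<gamma>) (\<lambda>c. rho xp x wp w v v' S c)
       \<le> measure_pmf.expectation (bernoulli_pmf \<gamma>) (\<lambda>c. coin (xnew xp x wp w S) w v' c + rest S)"
      using fB by (intro exp_mono) (auto simp: rest_def dx_def cw_def intro: order_trans[OF rho_bound])
    also have "\<dots> = \<gamma> * (1 - \<gamma>) / 3 * (norm (xnew xp x wp w S - w))\<^sup>2 + rest S"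
      using exp_add[OF fB, where f="coin (xnew xp x wp w S) w v'" and h="\<lambda>_. rest S"] exp_coin by simp
    also have "\<dots> \<le> rest2 S"
    proof -
      have "\<gamma> * (1 - \<gamma>) / 3 \<le> 7 * \<gamma> / 16" using \<gamma>_pos by (simp add: field_simps)
      hence "\<gamma> * (1 - \<gamma>) / 3 * (norm (xnew xp x wp w S - w))\<^sup>2 \<le> 7 * \<gamma> / 16 * (norm (xnew xp x wp w S - w))\<^sup>2"
        by (intro mult_right_mono) auto
      thus ?thesis unfolding rest_def rest2_def by linarith
    qed
    finally show ?thesis .
  qed
  have "measure_pmf.expectation Q (\<lambda>\<omega>. rho xp x wp w v v' (fst \<omega>) (snd \<omega>))
      = measure_pmf.expectation RS (\<lambda>S. measure_pmf.expectation (bernoulli_pmf \<gamma>) (\<lambda>c. rho xp x wp w v v' S c))"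
    by (subst exp_pair[OF fRS fB]) simp
  also have "\<dots> \<le> measure_pmf.expectation RS rest2"
    using fRS step1 by (intro exp_mono) auto
  also have "\<dots> = - \<eta> * measure_pmf.expectation RS (\<lambda>S. inner (err x xp wp S) (xtil xp x w - v))
      + 2 * \<eta>\<^sup>2 * measure_pmf.expectation RS (\<lambda>S. (norm (err x xp wp S))\<^sup>2) + (- 1/16 * dx - \<gamma>/16 * cw)"
    unfolding rest2_def by (rule exp_lin[OF fRS])
  also have "\<dots> = 2 * \<eta>\<^sup>2 * measure_pmf.expectation RS (\<lambda>S. (norm (err x xp wp S))\<^sup>2) + (- 1/16 * dx - \<gamma>/16 * cw)"
    by (simp add: exp_err_inner)
  also have "\<dots> \<le> 2 * \<eta>\<^sup>2 * (2 * Lbar\<^sup>2 / real b * (cw + dx)) + (- 1/16 * dx - \<gamma>/16 * cw)"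
    using exp_err_sq[of x xp wp] unfolding cw_def dx_def by (intro add_right_mono mult_left_mono) auto
  also have "\<dots> \<le> 0"
  proof -
    have "2 * \<eta>\<^sup>2 * (2 * Lbar\<^sup>2 / real b) = 4 * (\<eta>\<^sup>2 * Lbar\<^sup>2) / real b" by simp
    also have "\<dots> \<le> 4 * (\<gamma> * real b / 64) / real b"
      using etaLbar b_pos by (intro divide_right_mono mult_left_mono) auto
    also have "\<dots> = \<gamma> / 16" using b_pos by simp
    finally have c1: "2 * \<eta>\<^sup>2 * (2 * Lbar\<^sup>2 / real b) \<le> \<gamma> / 16" .
    have cd: "cw + dx \<ge> 0" by (simp add: cw_def dx_def)
    have "2 * \<eta>\<^sup>2 * (2 * Lbar\<^sup>2 / real b * (cw + dx)) \<le> \<gamma> / 16 * (cw + dx)"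
      using mult_right_mono[OF c1 cd] by (simp add: algebra_simps)
    moreover have "\<gamma> / 16 * (cw + dx) + (- 1/16 * dx - \<gamma>/16 * cw) = (\<gamma> - 1) / 16 * dx"
      by (simp add: field_simps)
    moreover have "(\<gamma> - 1) / 16 * dx \<le> 0" using \<gamma>_le unfolding dx_def
      by (intro mult_nonpos_nonneg) (auto simp: field_simps)
    ultimately show ?thesis by linarith
  qed
  finally show ?thesis .
qed

end


lemma exp_bind_return:
  fixes h :: "'c \<Rightarrow> real"
  assumes "finite (set_pmf A)"
  shows "measure_pmf.expectation (A \<bind> (\<lambda>y. return_pmf (f y))) h = measure_pmf.expectation A (\<lambda>y. h (f y))"
  using assms by (subst exp_bind) auto

lemma exp_replicate_split:
  fixes \<phi> :: "'b list \<Rightarrow> 'b \<Rightarrow> real"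
  assumes fq: "finite (set_pmf q)" and kK: "k < K"
  shows "measure_pmf.expectation (replicate_pmf K q) (\<lambda>\<omega>s. \<phi> (take k \<omega>s) (\<omega>s ! k))
       = measure_pmf.expectation (replicate_pmf k q) (\<lambda>pre. measure_pmf.expectation q (\<lambda>\<omega>. \<phi> pre \<omega>))"
proof -
  define m where "m = K - k - 1"
  have K: "K = k + Suc m" using kK by (simp add: m_def)
  have fk: "finite (set_pmf (replicate_pmf k q))" by (rule finite_replicate_pmf[OF fq])
  have fm: "finite (set_pmf (replicate_pmf m q))" by (rule finite_replicate_pmf[OF fq])
  have fSm: "finite (set_pmf (replicate_pmf (Suc m) q))" by (rule finite_replicate_pmf[OF fq])
  have "measure_pmf.expectation (replicate_pmf K q) (\<lambda>\<omega>s. \<phi> (take k \<omega>s) (\<omega>s ! k))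
     = measure_pmf.expectation (replicate_pmf k q) (\<lambda>pre. measure_pmf.expectation (replicate_pmf (Suc m) q)
          (\<lambda>ys. \<phi> (take k (pre @ ys)) ((pre @ ys) ! k)))"
  proof -
    have finb: "finite (set_pmf (replicate_pmf (Suc m) q \<bind> (\<lambda>ys. return_pmf (pre @ ys))))" for pre
      unfolding map_pmf_def[symmetric] using fSm by simp
    have inner: "measure_pmf.expectation (replicate_pmf (Suc m) q \<bind> (\<lambda>ys. return_pmf (pre @ ys))) h
        = measure_pmf.expectation (replicate_pmf (Suc m) q) (\<lambda>ys. h (pre @ ys))" for pre and h :: "'b list \<Rightarrow> real"
      by (rule exp_bind_return[OF fSm])
    show ?thesis unfolding K replicate_pmf_distrib
      by (subst exp_bind[OF fk finb]) (simp only: inner)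
  qed
  also have "\<dots> = measure_pmf.expectation (replicate_pmf k q) (\<lambda>pre. measure_pmf.expectation q (\<lambda>\<omega>. \<phi> pre \<omega>))"
  proof (rule exp_cong_supp[OF fk])
    fix pre assume "pre \<in> set_pmf (replicate_pmf k q)"
    hence len: "length pre = k" by (simp add: set_replicate_pmf)
    have "measure_pmf.expectation (replicate_pmf (Suc m) q) (\<lambda>ys. \<phi> (take k (pre @ ys)) ((pre @ ys) ! k))
        = measure_pmf.expectation q (\<lambda>\<omega>. measure_pmf.expectation (replicate_pmf m q) (\<lambda>rest. \<phi> (take k (pre @ \<omega> # rest)) ((pre @ \<omega> # rest) ! k)))"
      by (rule exp_replicate_Suc[OF fq])
    also have "\<dots> = measure_pmf.expectation q (\<lambda>\<omega>. \<phi> pre \<omega>)"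
    proof -
      have t: "take k (pre @ \<omega> # rest) = pre" for \<omega> rest by (simp add: len[symmetric])
      have n: "(pre @ \<omega> # rest) ! k = \<omega>" for \<omega> rest by (simp add: len[symmetric])
      show ?thesis unfolding t n by simp
    qed
    finally show "measure_pmf.expectation (replicate_pmf (Suc m) q) (\<lambda>ys. \<phi> (take k (pre @ ys)) ((pre @ ys) ! k))
        = measure_pmf.expectation q (\<lambda>\<omega>. \<phi> pre \<omega>)" .
  qed
  finally show ?thesis .
qed

context omm_loc begin

abbreviation st where "st x0 \<omega>s k \<equiv> omm_iter M Fs g \<eta> \<gamma> b x0 \<omega>s k"

primrec gh :: "'a \<Rightarrow> (nat list \<times> bool) list \<Rightarrow> nat \<Rightarrow> 'a \<times> 'a" where
  "gh x0 \<omega>s 0 = (x0, x0)"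
| "gh x0 \<omega>s (Suc k) = (case st x0 \<omega>s k of (xp, x, wp, w) \<Rightarrow> case \<omega>s ! k of (S, c) \<Rightarrow>
     (fst (gh x0 \<omega>s k) + (2 * \<eta>) *\<^sub>R err x xp wp S,
      snd (gh x0 \<omega>s k) - (2/3) *\<^sub>R zeta (xnew xp x wp w S) w (wnew xp x wp w S c)))"

definition rhok :: "'a \<Rightarrow> (nat list \<times> bool) list \<Rightarrow> nat \<Rightarrow> real" where
  "rhok x0 \<omega>s k = (case st x0 \<omega>s k of (xp, x, wp, w) \<Rightarrow>
      rho xp x wp w (fst (gh x0 \<omega>s k)) (snd (gh x0 \<omega>s k)) (fst (\<omega>s ! k)) (snd (\<omega>s ! k)))"

definition Psik :: "'a \<Rightarrow> (nat list \<times> bool) list \<Rightarrow> nat \<Rightarrow> 'a \<Rightarrow> real" where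
  "Psik x0 \<omega>s k u = (case st x0 \<omega>s k of (xp, x, wp, w) \<Rightarrow>
      Psi xp x wp w (fst (gh x0 \<omega>s k)) (snd (gh x0 \<omega>s k)) u)"

lemma st_prefix: "k \<le> length pre \<Longrightarrow> st x0 (pre @ ys) k = st x0 pre k"
  by (induction k) (auto simp: nth_append)

lemma gh_prefix: "k \<le> length pre \<Longrightarrow> gh x0 (pre @ ys) k = gh x0 pre k"
  by (induction k) (auto simp: nth_append st_prefix)

lemma rhok_take:
  assumes "k < length \<omega>s"
  shows "rhok x0 \<omega>s k = (case st x0 (take k \<omega>s) k of (xp, x, wp, w) \<Rightarrow>
      rho xp x wp w (fst (gh x0 (take k \<omega>s) k)) (snd (gh x0 (take k \<omega>s) k)) (fst (\<omega>s ! k)) (snd (\<omega>s ! k)))"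
proof -
  have "st x0 \<omega>s k = st x0 (take k \<omega>s @ drop k \<omega>s) k" by simp
  also have "\<dots> = st x0 (take k \<omega>s) k" using assms by (intro st_prefix) simp
  finally have 1: "st x0 \<omega>s k = st x0 (take k \<omega>s) k" .
  have "gh x0 \<omega>s k = gh x0 (take k \<omega>s @ drop k \<omega>s) k" by simp
  also have "\<dots> = gh x0 (take k \<omega>s) k" using assms by (intro gh_prefix) simp
  finally have 2: "gh x0 \<omega>s k = gh x0 (take k \<omega>s) k" .
  show ?thesis using 1 2 unfolding rhok_def by simp
qed

lemma exp_rhok:
  assumes "k < K"
  shows "measure_pmf.expectation (replicate_pmf K Q) (\<lambda>\<omega>s. rhok x0 \<omega>s k) \<le> 0"
proof -
  define \<phi> where "\<phi> pre \<omega> = (case st x0 pre k of (xp, x, wp, w) \<Rightarrow>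
      rho xp x wp w (fst (gh x0 pre k)) (snd (gh x0 pre k)) (fst \<omega>) (snd \<omega>))" for pre \<omega>
  have fK: "finite (set_pmf (replicate_pmf K Q))" by (rule finite_replicate_pmf[OF fQ])
  have "measure_pmf.expectation (replicate_pmf K Q) (\<lambda>\<omega>s. rhok x0 \<omega>s k)
      = measure_pmf.expectation (replicate_pmf K Q) (\<lambda>\<omega>s. \<phi> (take k \<omega>s) (\<omega>s ! k))"
    using fK assms by (intro exp_cong_supp) (auto simp: set_replicate_pmf rhok_take \<phi>_def)
  also have "\<dots> = measure_pmf.expectation (replicate_pmf k Q) (\<lambda>pre. measure_pmf.expectation Q (\<lambda>\<omega>. \<phi> pre \<omega>))"
    by (rule exp_replicate_split[OF fQ assms])
  also have "\<dots> \<le> measure_pmf.expectation (replicate_pmf k Q) (\<lambda>pre. 0)"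
  proof (rule exp_mono[OF finite_replicate_pmf[OF fQ]])
    fix pre
    obtain xp x wp w where "st x0 pre k = (xp, x, wp, w)" by (cases "st x0 pre k") auto
    thus "measure_pmf.expectation Q (\<phi> pre) \<le> 0" using exp_rho unfolding \<phi>_def by simp
  qed
  finally show ?thesis by simp
qed

end

context omm_loc begin

abbreviation xs where "xs x0 \<omega>s k \<equiv> omm_x M Fs g \<eta> \<gamma> b x0 \<omega>s k"

lemma st_Suc:
  assumes "st x0 \<omega>s k = (xp, x, wp, w)" "\<omega>s ! k = (S, c)"
  shows "st x0 \<omega>s (Suc k) = (x, xnew xp x wp w S, w, wnew xp x wp w S c)"
  using assms by (simp add: step_eq)

lemma xs_Suc:
  assumes "st x0 \<omega>s k = (xp, x, wp, w)" "\<omega>s ! k = (S, c)"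
  shows "xs x0 \<omega>s (Suc k) = xnew xp x wp w S"
  using st_Suc[OF assms] by (simp add: omm_x_def)

lemma step_path:
  assumes gu: "g u = ereal gu"
  shows "\<eta> * (inner (F (xs x0 \<omega>s (Suc k))) (xs x0 \<omega>s (Suc k) - u) + gr (xs x0 \<omega>s (Suc k)) - gu)
     \<le> Psik x0 \<omega>s k u - Psik x0 \<omega>s (Suc k) u + rhok x0 \<omega>s k"
proof -
  obtain xp x wp w where s: "st x0 \<omega>s k = (xp, x, wp, w)" by (cases "st x0 \<omega>s k") auto
  obtain S c where o: "\<omega>s ! k = (S, c)" by (cases "\<omega>s ! k") auto
  obtain v v' where v: "gh x0 \<omega>s k = (v, v')" by (cases "gh x0 \<omega>s k") auto
  have x': "xnew xp x wp w S = prox \<eta> g (x + \<gamma> *\<^sub>R (w - x) - \<eta> *\<^sub>R (2 *\<^sub>R F x - F xp + err x xp wp S))"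
    unfolding xnew_def Delta_eq ..
  have "\<eta> * (inner (F (xnew xp x wp w S)) (xnew xp x wp w S - u) + gr (xnew xp x wp w S) - gu)
     \<le> Psi xp x wp w v v' u - Psi x (xnew xp x wp w S) w (wnew xp x wp w S c) (v + (2 * \<eta>) *\<^sub>R err x xp wp S)
          (v' - (2/3) *\<^sub>R zeta (xnew xp x wp w S) w (wnew xp x wp w S c)) u
     + rho0 xp x wp w v v' (xnew xp x wp w S) (wnew xp x wp w S c) (err x xp wp S) (xtil xp x w)"
    by (rule step_ineq0[OF gu x'])
  moreover have "xs x0 \<omega>s (Suc k) = xnew xp x wp w S" by (rule xs_Suc[OF s o])
  moreover have "Psik x0 \<omega>s k u = Psi xp x wp w v v' u" by (simp add: Psik_def s v)
  moreover have "Psik x0 \<omega>s (Suc k) u = Psi x (xnew xp x wp w S) w (wnew xp x wp w S c) (v + (2 * \<eta>) *\<^sub>R err x xp wp S)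
          (v' - (2/3) *\<^sub>R zeta (xnew xp x wp w S) w (wnew xp x wp w S c)) u"
    by (simp add: Psik_def s o v step_eq)
  moreover have "rhok x0 \<omega>s k = rho0 xp x wp w v v' (xnew xp x wp w S) (wnew xp x wp w S c) (err x xp wp S) (xtil xp x w)"
    by (simp add: rhok_def rho_def s o v)
  ultimately show ?thesis by simp
qed

lemma Psi_nonneg: "Psi xp x wp w v v' u \<ge> 0"
proof -
  define a where "a = norm (x - u)"
  define s where "s = norm (x - xp)"
  have a0: "a \<ge> 0" "s \<ge> 0" by (auto simp: a_def s_def)
  have "- \<eta> * inner (F x - F xp) (x - u) \<ge> - (1/8) * (s * a)"
  proof -
    have "\<eta> * inner (F x - F xp) (x - u) \<le> \<eta> * (norm (F x - F xp) * norm (x - u))"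
      using eta_pos norm_cauchy_schwarz[of "F x - F xp" "x - u"] by (intro mult_left_mono) auto
    also have "\<dots> \<le> \<eta> * (L * s * a)"
      using eta_pos F_lip'[of x xp] a0 unfolding a_def s_def by (intro mult_left_mono mult_right_mono) auto
    also have "\<dots> = (\<eta> * L) * (s * a)" by simp
    also have "\<dots> \<le> 1/8 * (s * a)" using etaL a0 by (intro mult_right_mono) auto
    finally show ?thesis by simp
  qed
  moreover have "(1-\<gamma>)/2 * a\<^sup>2 \<ge> 15/32 * a\<^sup>2"
    using \<gamma>_le by (intro mult_right_mono) (auto simp: field_simps)
  moreover have "15/32 * a\<^sup>2 + 1/8 * s\<^sup>2 - 1/8 * (s * a) \<ge> 0"
  proof -
    have h: "2 * (s * a) \<le> a\<^sup>2 + s\<^sup>2" using sum_squares_ge_zero[of "s - a" 0]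
      by (simp add: power2_eq_square algebra_simps)
    have "a\<^sup>2 \<ge> 0" "s\<^sup>2 \<ge> 0" by auto
    thus ?thesis using h by linarith
  qed
  moreover have "(norm (w - u))\<^sup>2 \<ge> 0" "(norm (x - wp))\<^sup>2 \<ge> 0" "(norm (v - u))\<^sup>2 \<ge> 0" "(norm (v' - u))\<^sup>2 \<ge> 0"
    by auto
  moreover have "\<gamma>/16 * (norm (x - wp))\<^sup>2 \<ge> 0" using \<gamma>_pos by simp
  ultimately show ?thesis unfolding Psi_def a_def[symmetric] s_def[symmetric] by linarith
qed

lemma Psi0: "Psi x0 x0 x0 x0 x0 x0 u \<le> 2 * (norm (x0 - u))\<^sup>2"
proof -
  have "Psi x0 x0 x0 x0 x0 x0 u = (2 - \<gamma>/2) * (norm (x0 - u))\<^sup>2"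
    unfolding Psi_def by (simp add: field_simps)
  also have "\<dots> \<le> 2 * (norm (x0 - u))\<^sup>2" using \<gamma>_pos by (intro mult_right_mono) auto
  finally show ?thesis .
qed

lemma path_sum:
  assumes gu: "g u = ereal gu"
  shows "\<eta> * (\<Sum>k<K. inner (F (xs x0 \<omega>s (Suc k))) (xs x0 \<omega>s (Suc k) - u) + gr (xs x0 \<omega>s (Suc k)) - gu)
     \<le> 2 * (norm (x0 - u))\<^sup>2 + (\<Sum>k<K. rhok x0 \<omega>s k)"
proof -
  have tel: "\<eta> * (\<Sum>k<n. inner (F (xs x0 \<omega>s (Suc k))) (xs x0 \<omega>s (Suc k) - u) + gr (xs x0 \<omega>s (Suc k)) - gu)
     \<le> Psik x0 \<omega>s 0 u - Psik x0 \<omega>s n u + (\<Sum>k<n. rhok x0 \<omega>s k)" for n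
  proof (induction n)
    case 0 thus ?case by simp
  next
    case (Suc n)
    have "\<eta> * (\<Sum>k<Suc n. inner (F (xs x0 \<omega>s (Suc k))) (xs x0 \<omega>s (Suc k) - u) + gr (xs x0 \<omega>s (Suc k)) - gu)
       = \<eta> * (\<Sum>k<n. inner (F (xs x0 \<omega>s (Suc k))) (xs x0 \<omega>s (Suc k) - u) + gr (xs x0 \<omega>s (Suc k)) - gu)
         + \<eta> * (inner (F (xs x0 \<omega>s (Suc n))) (xs x0 \<omega>s (Suc n) - u) + gr (xs x0 \<omega>s (Suc n)) - gu)"
      by (simp add: distrib_left)
    thus ?case using Suc step_path[OF gu, of x0 \<omega>s n] by simp
  qed
  have "Psik x0 \<omega>s 0 u \<le> 2 * (norm (x0 - u))\<^sup>2" using Psi0 by (simp add: Psik_def)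
  moreover have "Psik x0 \<omega>s K u \<ge> 0"
    unfolding Psik_def by (cases "st x0 \<omega>s K") (auto intro: Psi_nonneg)
  ultimately show ?thesis using tel[of K] by linarith
qed

end


context gfun begin

lemma jensen_avg:
  fixes y :: "nat \<Rightarrow> 'a" and a :: "nat \<Rightarrow> real"
  assumes ga: "\<And>k. g (y k) = ereal (a k)" and n: "n \<ge> 1"
  shows "g ((1 / real n) *\<^sub>R (\<Sum>k<n. y k)) \<le> ereal ((1 / real n) * (\<Sum>k<n. a k))"
  using n
proof (induction n rule: nat_induct_at_least)
  case base thus ?case using ga[of 0] by simp
next
  case (Suc n)
  define t where "t = 1 / real (Suc n)"
  have t: "0 \<le> t" "t \<le> 1" by (auto simp: t_def)
  have eq: "(1 / real (Suc n)) *\<^sub>R (\<Sum>k<Suc n. y k) = (1 - t) *\<^sub>R ((1 / real n) *\<^sub>R (\<Sum>k<n. y k)) + t *\<^sub>R y n"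
    using Suc.hyps by (simp add: t_def scaleR_add_right field_simps)
  have "g ((1 / real (Suc n)) *\<^sub>R (\<Sum>k<Suc n. y k)) \<le> ereal (1 - t) * g ((1 / real n) *\<^sub>R (\<Sum>k<n. y k)) + ereal t * g (y n)"
    unfolding eq by (rule g_conv[OF t])
  also have "\<dots> \<le> ereal (1 - t) * ereal ((1 / real n) * (\<Sum>k<n. a k)) + ereal t * ereal (a n)"
  proof (rule add_mono)
    show "ereal (1 - t) * g ((1 / real n) *\<^sub>R (\<Sum>k<n. y k)) \<le> ereal (1 - t) * ereal ((1 / real n) * (\<Sum>k<n. a k))"
      by (rule ereal_mult_left_mono[OF Suc.IH]) (use t in simp)
    show "ereal t * g (y n) \<le> ereal t * ereal (a n)" by (simp add: ga)
  qed
  also have "\<dots> = ereal ((1 / real (Suc n)) * (\<Sum>k<Suc n. a k))"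
  proof -
    have nz: "real n \<noteq> 0" using Suc.hyps by simp
    have "1 - t = real n / real (Suc n)" by (simp add: t_def field_simps)
    hence "(1 - t) * ((1 / real n) * (\<Sum>k<n. a k)) = (\<Sum>k<n. a k) / real (Suc n)"
      using nz by simp
    thus ?thesis by (simp add: t_def add_divide_distrib)
  qed
  finally show ?case .
qed

end

context omm_loc begin

lemma g_xs: "g (xs x0 \<omega>s (Suc k)) = ereal (gr (xs x0 \<omega>s (Suc k)))"
proof -
  obtain xp x wp w where s: "st x0 \<omega>s k = (xp, x, wp, w)" by (cases "st x0 \<omega>s k") auto
  obtain S c where o: "\<omega>s ! k = (S, c)" by (cases "\<omega>s ! k") auto
  show ?thesis unfolding xs_Suc[OF s o] xnew_def gr_def by (rule prox_finite[OF eta_pos])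
qed

lemma F_mono': "inner (F u) (y - u) \<le> inner (F y) (y - u)"
proof -
  have "inner (F y - F u) (y - u) \<ge> 0" using F_mono unfolding monotone_op_def by blast
  thus ?thesis by (simp add: inner_diff_left)
qed

definition D2 :: "'a \<Rightarrow> 'a set \<Rightarrow> real" where "D2 x0 C = (SUP x\<in>C. (norm (x0 - x))\<^sup>2)"

lemma D2_upper:
  assumes "compact C" "u \<in> C" shows "(norm (x0 - u))\<^sup>2 \<le> D2 x0 C"
proof -
  have "compact ((\<lambda>x. (norm (x0 - x))\<^sup>2) ` C)"
    using assms(1) by (intro compact_continuous_image continuous_intros)
  hence "bdd_above ((\<lambda>x. (norm (x0 - x))\<^sup>2) ` C)" by (intro bounded_imp_bdd_above compact_imp_bounded)
  thus ?thesis unfolding D2_def by (rule cSUP_upper[OF assms(2)])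
qed

lemma gap_path:
  assumes K: "K \<ge> 1" and C: "compact C"
  shows "Gap F g C (omm_avg M Fs g \<eta> \<gamma> b x0 K \<omega>s)
     \<le> ereal ((2 * D2 x0 C + (\<Sum>k<K. rhok x0 \<omega>s k)) / (\<eta> * real K))"
proof -
  define y where "y k = xs x0 \<omega>s (Suc k)" for k
  define z where "z = omm_avg M Fs g \<eta> \<gamma> b x0 K \<omega>s"
  define R where "R = (\<Sum>k<K. rhok x0 \<omega>s k)"
  have z: "z = (1 / real K) *\<^sub>R (\<Sum>k<K. y k)" by (simp add: z_def omm_avg_def y_def)
  have gy: "g (y k) = ereal (gr (y k))" for k unfolding y_def by (rule g_xs)
  have gz_le: "g z \<le> ereal ((1 / real K) * (\<Sum>k<K. gr (y k)))"
    unfolding z by (rule jensen_avg[OF gy K])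
  then obtain gz where gz: "g z = ereal gz" "gz \<le> (1 / real K) * (\<Sum>k<K. gr (y k))"
    using g_not_minf[of z] by (cases "g z") auto
  have Kpos: "real K > 0" using K by simp
  show ?thesis unfolding Gap_def z_def[symmetric] R_def[symmetric]
  proof (rule SUP_least)
    fix u assume uC: "u \<in> C"
    show "ereal (inner (F u) (z - u)) + g z - g u \<le> ereal ((2 * D2 x0 C + R) / (\<eta> * real K))"
    proof (cases "g u")
      case PInf thus ?thesis using gz by simp
    next
      case MInf thus ?thesis using g_not_minf[of u] by simp
    next
      case (real gu)
      have lin: "inner (F u) (z - u) = (1 / real K) * (\<Sum>k<K. inner (F u) (y k - u))"
        unfolding z using Kpos
        by (simp add: inner_diff_right inner_sum_right sum_subtractf field_simps)
      have "inner (F u) (z - u) + gz - gu \<le>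
          (1 / real K) * (\<Sum>k<K. inner (F (y k)) (y k - u)) + (1 / real K) * (\<Sum>k<K. gr (y k)) - gu"
      proof -
        have "(\<Sum>k<K. inner (F u) (y k - u)) \<le> (\<Sum>k<K. inner (F (y k)) (y k - u))"
          by (intro sum_mono F_mono')
        hence "(1 / real K) * (\<Sum>k<K. inner (F u) (y k - u)) \<le> (1 / real K) * (\<Sum>k<K. inner (F (y k)) (y k - u))"
          using Kpos by (intro mult_left_mono) auto
        thus ?thesis using lin gz(2) by linarith
      qed
      also have "\<dots> = (1 / (\<eta> * real K)) * (\<eta> * (\<Sum>k<K. inner (F (y k)) (y k - u) + gr (y k) - gu))"
        using Kpos eta_pos by (simp add: sum.distrib sum_subtractf field_simps)
      also have "\<dots> \<le> (1 / (\<eta> * real K)) * (2 * (norm (x0 - u))\<^sup>2 + R)"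
      proof -
        have ps: "\<eta> * (\<Sum>k<K. inner (F (y k)) (y k - u) + gr (y k) - gu) \<le> 2 * (norm (x0 - u))\<^sup>2 + R"
          unfolding y_def R_def by (rule path_sum[OF real])
        show ?thesis using ps Kpos eta_pos by (intro mult_left_mono) auto
      qed
      also have "\<dots> \<le> (1 / (\<eta> * real K)) * (2 * D2 x0 C + R)"
        using D2_upper[OF C uC] Kpos eta_pos by (intro mult_left_mono) auto
      also have "\<dots> = (2 * D2 x0 C + R) / (\<eta> * real K)" by simp
      finally show ?thesis using real gz(1) by simp
    qed
  qed
qed

end

context omm_loc begin

lemma expected_gap_bound:
  assumes K: "K \<ge> 1" and C: "compact C"
  shows "omm_expected_gap M Fs g \<eta> \<gamma> \<gamma> b x0 C K \<le> ereal (2 / (\<eta> * real K) * D2 x0 C)"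
proof -
  define P where "P = replicate_pmf K Q"
  have P: "omm_samples M b \<gamma> K = P" by (simp add: omm_samples_def P_def)
  have fP: "finite (set_pmf P)" unfolding P_def by (rule finite_replicate_pmf[OF fQ])
  define R where "R \<omega>s = (\<Sum>k<K. rhok x0 \<omega>s k)" for \<omega>s
  define B where "B \<omega>s = (2 * D2 x0 C + R \<omega>s) / (\<eta> * real K)" for \<omega>s
  have "omm_expected_gap M Fs g \<eta> \<gamma> \<gamma> b x0 C K
      = (\<Sum>\<omega>s\<in>set_pmf P. ereal (pmf P \<omega>s) * Gap F g C (omm_avg M Fs g \<eta> \<gamma> b x0 K \<omega>s))"
    by (simp add: omm_expected_gap_def P)
  also have "\<dots> \<le> (\<Sum>\<omega>s\<in>set_pmf P. ereal (pmf P \<omega>s) * ereal (B \<omega>s))"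
  proof (rule sum_mono)
    fix \<omega>s
    show "ereal (pmf P \<omega>s) * Gap F g C (omm_avg M Fs g \<eta> \<gamma> b x0 K \<omega>s) \<le> ereal (pmf P \<omega>s) * ereal (B \<omega>s)"
      using gap_path[OF K C, of x0 \<omega>s] unfolding B_def R_def
      by (intro ereal_mult_left_mono) auto
  qed
  also have "\<dots> = ereal (measure_pmf.expectation P B)"
    by (simp add: exp_sum_repr[OF fP] mult.commute)
  also have "measure_pmf.expectation P B = 1 / (\<eta> * real K) * measure_pmf.expectation P R + 0 * 0 + 2 * D2 x0 C / (\<eta> * real K)"
  proof -
    have "measure_pmf.expectation P B = measure_pmf.expectation P (\<lambda>\<omega>s. 1 / (\<eta> * real K) * R \<omega>s + 0 * (\<lambda>_. 0) \<omega>s + 2 * D2 x0 C / (\<eta> * real K))"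
      unfolding B_def by (simp add: add_divide_distrib add.commute)
    also have "\<dots> = 1 / (\<eta> * real K) * measure_pmf.expectation P R + 0 * measure_pmf.expectation P (\<lambda>_. 0) + 2 * D2 x0 C / (\<eta> * real K)"
      by (rule exp_lin[OF fP])
    finally show ?thesis by simp
  qed
  also have "\<dots> \<le> 2 / (\<eta> * real K) * D2 x0 C"
  proof -
    have "measure_pmf.expectation P R = (\<Sum>k<K. measure_pmf.expectation P (\<lambda>\<omega>s. rhok x0 \<omega>s k))"
      unfolding R_def by (rule exp_sum[OF fP])
    also have "\<dots> \<le> 0" unfolding P_def by (intro sum_nonpos exp_rhok) auto
    finally have "measure_pmf.expectation P R \<le> 0" .
    moreover have "1 / (\<eta> * real K) \<ge> 0" using eta_pos by simp
    ultimately have "1 / (\<eta> * real K) * measure_pmf.expectation P R \<le> 0" by (rule mult_nonneg_nonpos[rotated])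
    thus ?thesis by simp
  qed
  finally show ?thesis by simp
qed

end


theorem theorem1:
  fixes Fs :: "nat \<Rightarrow> 'a::euclidean_space \<Rightarrow> 'a"
    and M b :: nat
    and Ls :: "nat \<Rightarrow> real"
    and L Lbar p \<gamma> \<eta> :: real
    and g :: "'a \<Rightarrow> ereal"
    and x0 :: 'a
    and C :: "'a set"
  assumes g_proper: "proper_fun g"
    and g_convex: "ereal_convex g"
    and g_lsc: "lsc_fun g"
    and M_pos: "M \<ge> 1"
    and VI_sol: "\<exists>xs. VI_solution (avg_op M Fs) g xs"
    and F_mono: "monotone_op (avg_op M Fs)"
    and L_pos: "L > 0"
    and F_lip: "L-lipschitz_on UNIV (avg_op M Fs)"
    and Fm_lip: "\<And>m. m < M \<Longrightarrow> (Ls m)-lipschitz_on UNIV (Fs m)"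
    and Lbar_def: "Lbar = sqrt ((1 / real M) * (\<Sum>m<M. (Ls m)\<^sup>2))"
    and Lbar_pos: "Lbar > 0"
    and b_range: "1 \<le> b" "b \<le> M"
    and p_pos: "0 < p" and p_eq: "p = \<gamma>" and \<gamma>_le: "\<gamma> \<le> 1 / 16"
    and \<eta>_def: "\<eta> = min (sqrt (\<gamma> * real b) / (8 * Lbar)) (1 / (8 * L))"
    and C_compact: "compact C" and C_ne: "C \<noteq> {}"
  shows "(\<forall>K. K \<ge> 1 \<longrightarrow>
            omm_expected_gap M Fs g \<eta> \<gamma> p b x0 C K
              \<le> ereal (2 / (\<eta> * real K) * (SUP x\<in>C. (norm (x0 - x))\<^sup>2)))
       \<and> (\<forall>\<epsilon>>0. \<forall>K. real K \<ge> 16 * ((1 / sqrt (p * real b)) * (Lbar * (SUP x\<in>C. (norm (x0 - x))\<^sup>2) / \<epsilon>)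
                                   + L * (SUP x\<in>C. (norm (x0 - x))\<^sup>2) / \<epsilon>) \<and> K \<ge> 1 \<longrightarrow>
            omm_expected_gap M Fs g \<eta> \<gamma> p b x0 C K \<le> ereal \<epsilon>)"
proof -
  have \<gamma>_pos: "0 < \<gamma>" using p_pos p_eq by simp
  interpret omm_loc g Fs M b Ls L Lbar \<gamma> \<eta>
    by unfold_locales (use assms \<gamma>_pos in auto)
  define D where "D = (SUP x\<in>C. (norm (x0 - x))\<^sup>2)"
  have D2D: "D2 x0 C = D" by (simp add: D2_def D_def)
  have part1: "omm_expected_gap M Fs g \<eta> \<gamma> p b x0 C K \<le> ereal (2 / (\<eta> * real K) * D)" if K: "K \<ge> 1" for K
    using expected_gap_bound[OF K C_compact, of x0] unfolding D2D p_eq .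
  have D_nonneg: "D \<ge> 0"
  proof -
    obtain u where u: "u \<in> C" using C_ne by blast
    have "(norm (x0 - u))\<^sup>2 \<le> D2 x0 C" by (rule D2_upper[OF C_compact u])
    thus ?thesis unfolding D2D by (meson order.trans zero_le_power2)
  qed
  have inv_eta: "1 / \<eta> \<le> 8 * Lbar / sqrt (p * real b) + 8 * L"
  proof -
    have sb: "sqrt (\<gamma> * real b) > 0" using \<gamma>_pos b_range by simp
    have a: "sqrt (\<gamma> * real b) / (8 * Lbar) > 0" using sb Lbar_pos by simp
    have c: "1 / (8 * L) > 0" using L_pos by simp
    show ?thesis
    proof (cases "sqrt (\<gamma> * real b) / (8 * Lbar) \<le> 1 / (8 * L)")
      case True
      hence "\<eta> = sqrt (\<gamma> * real b) / (8 * Lbar)" by (simp add: \<eta>_def)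
      hence "1 / \<eta> = 8 * Lbar / sqrt (p * real b)" using p_eq by simp
      thus ?thesis using L_pos by simp
    next
      case False
      hence "\<eta> = 1 / (8 * L)" by (simp add: \<eta>_def)
      hence "1 / \<eta> = 8 * L" by simp
      moreover have "8 * Lbar / sqrt (p * real b) \<ge> 0" using Lbar_pos p_pos by (intro divide_nonneg_nonneg) auto
      ultimately show ?thesis by simp
    qed
  qed
  have part2: "omm_expected_gap M Fs g \<eta> \<gamma> p b x0 C K \<le> ereal \<epsilon>"
    if e: "\<epsilon> > 0" and hyp: "real K \<ge> 16 * ((1 / sqrt (p * real b)) * (Lbar * D / \<epsilon>) + L * D / \<epsilon>)"
      and K: "K \<ge> 1" for \<epsilon> K
  proof -
    define X where "X = Lbar * D / sqrt (p * real b) + L * D"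
    have sq: "sqrt (p * real b) > 0" using p_pos b_range by simp
    have "16 * ((1 / sqrt (p * real b)) * (Lbar * D / \<epsilon>) + L * D / \<epsilon>) = 16 * X / \<epsilon>"
      using sq e by (simp add: X_def field_simps)
    hence "16 * X / \<epsilon> \<le> real K" using hyp by simp
    hence X16: "16 * X \<le> real K * \<epsilon>" using e by (simp add: field_simps)
    have Kp: "real K > 0" using K by simp
    have "2 / (\<eta> * real K) * D = (2 * D / real K) * (1 / \<eta>)" by simp
    also have "\<dots> \<le> (2 * D / real K) * (8 * Lbar / sqrt (p * real b) + 8 * L)"
      using inv_eta D_nonneg Kp by (intro mult_left_mono) auto
    also have "\<dots> = 16 * X / real K" by (simp add: X_def field_simps)
    also have "\<dots> \<le> \<epsilon>" using X16 Kp by (simp add: field_simps)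
    finally have "2 / (\<eta> * real K) * D \<le> \<epsilon>" .
    thus ?thesis using part1[OF K] by (meson ereal_less_eq(3) order.trans)
  qed
  show ?thesis unfolding D_def[symmetric] using part1 part2 by blast
qed


end
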